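(* Assume (A1) and (A2) as stated in the context. Then for every $\varphi\in\mathcal{C}_b^2(\Theta\times\mathbb{R}^{dT})\cap\mathcal{B}_b(\Theta\times\mathbb{R}^{dT})$ there exists $C<+\infty$ such that for all $l,N_l\in\mathbb{N}$, $$\int\left(\varphi(\theta,x^l_{1:T})\prod_{k=1}^T\check H_{k,\theta}(x^l_k,\tilde x^{l-1}_k)-\varphi(\theta,\tilde x^{l-1}_{1:T})\prod_{k=1}^T\check H_{k,\theta}(\tilde x^{l-1}_k,x^l_k)\right)^2\check\pi^{l,N_l}\big(d(\theta,x^l_{1:T},\tilde x^{l-1}_{1:T})\big)\le C\Delta_l.$$
   Context: Notation: $\mathbb{N}=\{1,2,\dots\}$, $\Delta_l=2^{-l}$; $\mathcal{C}_b^2\cap\mathcal{B}_b$ denotes bounded, twice continuously differentiable functions with bounded first and second derivatives. Model. Fix $d,d_\theta,T\in\mathbb{N}$, $\Theta\subseteq\mathbb{R}^{d_\theta}$, $x_0\in\mathbb{R}^d$, a measurable space $\mathsf{Y}$, observations $y_1,\dots,y_T\in\mathsf{Y}$. For each $\theta\in\Theta$: $a_\theta:\mathbb{R}^d\times\mathbb{R}\to\mathbb{R}^d$, $\xi_\theta:\mathbb{R}^{2d}\to\mathbb{R}$, $\sigma:\mathbb{R}^d\to\mathbb{R}^{d\times d}$, a positive bounded likelihood $G_\theta(x,y)$; $\nu$ a Lebesgue probability density on $\Theta$. (A1): $a_\theta$ (as a function on $\mathbb{R}^{d+1}$) and $\xi_\theta$ (on $\mathbb{R}^{2d}$) are in $\mathcal{C}_b^2\cap\mathcal{B}_b$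 with bounds uniform in $\theta$; $\sigma\in\mathcal{C}_b^2\cap\mathcal{B}_b$; $\sigma(x)\sigma(x)^\top$ positive definite for all $x$. (A2): for every $y$, $(\theta,x)\mapsto G_\theta(x,y)$ is in $\mathcal{C}_b^2(\Theta\times\mathbb{R}^d)\cap\mathcal{B}_b(\Theta\times\mathbb{R}^d)$ and $\inf_{\theta,x,y}G_\theta(x,y)>0$. Coupled particle-driven Euler scheme (level $l\in\mathbb{N}$, $N\in\mathbb{N}$, $\theta$ fixed). Let $W^1,\dots,W^N,B$ be independent standard $d$-dim Brownian motions. For step $h\in\{\Delta_l,\Delta_{l-1}\}$ define particles $X^{h,i}_0=x_0$, $X^{h,i}_{(k+1)h}=X^{h,i}_{kh}+a_\theta\big(X^{h,i}_{kh},\frac1N\sum_{j=1}^N\xi_\theta(X^{h,i}_{kh},X^{h,j}_{kh})\big)h+\sigma(X^{h,i}_{kh})(W^i_{(k+1)h}-W^i_{kh})$, $k=0,\dots,Th^{-1}-1$, with empirical measures $\mu^h_{kh}=\frac1N\sum_j\delta_{X^{h,j}_{kh}}$ (both levels use the same $W^i$). Then $Z^l$ (step $\Delta_l$) and $\tilde Z^{l-1}$ (step $\Delta_{l-1}$) are defined by $Z_0=x_0$, $Z_{(k+1)h}=Z_{kh}+a_\theta\big(Z_{kh},\int\xi_\theta(Z_{kh},x)\mu^h_{kh}(dx)\big)h+\sigma(Z_{kh})(B_{(k+1)h}-B_{kh})$, both driven by the same $B$. Let $H_{k,\theta}(x,x')=\frac12(G_\theta(x,y_k)+G_\theta(x',y_k))$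 and $\check H_{k,\theta}(x,x')=G_\theta(x,y_k)/H_{k,\theta}(x,x')$. The probability measure $\check\pi^{l,N}$ on $\Theta\times\mathbb{R}^{dT}\times\mathbb{R}^{dT}$ is defined by $\int f\,d\check\pi^{l,N}=\frac{\int_\Theta\nu(\theta)\mathbb{E}_\theta[f(\theta,Z^l_{1:T},\tilde Z^{l-1}_{1:T})\prod_{k=1}^TH_{k,\theta}(Z^l_k,\tilde Z^{l-1}_k)]d\theta}{\int_\Theta\nu(\theta)\mathbb{E}_\theta[\prod_{k=1}^TH_{k,\theta}(Z^l_k,\tilde Z^{l-1}_k)]d\theta}$, where $Z_{1:T}$ denotes the values at integer times $1,\dots,T$ and the expectation is over particles and $B$. *)

theory Defs
  imports "HOL-Probability.Probability"
begin

definition C2b_bd :: "'a::euclidean_space set \<Rightarrow> real \<Rightarrow> ('a \<Rightarrow> 'b::real_normed_vector) \<Rightarrow> bool" where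
  "C2b_bd S M f \<longleftrightarrow> (\<exists>(Df :: 'a \<Rightarrow> 'a \<Rightarrow>\<^sub>L 'b) (D2 :: 'a \<Rightarrow> 'a \<Rightarrow>\<^sub>L ('a \<Rightarrow>\<^sub>L 'b)).
      (\<forall>x\<in>S. (f has_derivative blinfun_apply (Df x)) (at x within S)) \<and>
      (\<forall>x\<in>S. (Df has_derivative blinfun_apply (D2 x)) (at x within S)) \<and>
      continuous_on S D2 \<and>
      (\<forall>x\<in>S. norm (f x) \<le> M \<and> norm (Df x) \<le> M \<and> norm (D2 x) \<le> M))"

definition C2b_on :: "'a::euclidean_space set \<Rightarrow> ('a \<Rightarrow> 'b::real_normed_vector) \<Rightarrow> bool" where
  "C2b_on S f \<longleftrightarrow> (\<exists>M. C2b_bd S M f)"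

definition Delta :: "nat \<Rightarrow> real" where
  "Delta l = (1/2) ^ l"

text \<open>Particle system with step h, drift a (parameter theta already fixed), interaction xi,
  diffusion sg, N particles (indices 0..N-1), Brownian increments dW i k over step k.\<close>
primrec particles :: "((real^'d) \<times> real \<Rightarrow> real^'d) \<Rightarrow> ((real^'d) \<times> (real^'d) \<Rightarrow> real) \<Rightarrow>
    (real^'d \<Rightarrow> real^'d^'d) \<Rightarrow> real^'d \<Rightarrow> nat \<Rightarrow> real \<Rightarrow> (nat \<Rightarrow> nat \<Rightarrow> real^'d) \<Rightarrow>
    nat \<Rightarrow> nat \<Rightarrow> real^'d" where
  "particles a xi sg x0 N h dW 0 = (\<lambda>i. x0)"
| "particles a xi sg x0 N h dW (Suc k) =
     (let X = particles a xi sg x0 N h dW k in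
      (\<lambda>i. X i + h *\<^sub>R a (X i, (\<Sum>j<N. xi (X i, X j)) / real N) + sg (X i) *v dW i k))"

primrec driven :: "((real^'d) \<times> real \<Rightarrow> real^'d) \<Rightarrow> ((real^'d) \<times> (real^'d) \<Rightarrow> real) \<Rightarrow>
    (real^'d \<Rightarrow> real^'d^'d) \<Rightarrow> real^'d \<Rightarrow> nat \<Rightarrow> real \<Rightarrow> (nat \<Rightarrow> nat \<Rightarrow> real^'d) \<Rightarrow>
    (nat \<Rightarrow> real^'d) \<Rightarrow> nat \<Rightarrow> real^'d" where
  "driven a xi sg x0 N h dW dB 0 = x0"
| "driven a xi sg x0 N h dW dB (Suc k) =
     (let z = driven a xi sg x0 N h dW dB k; X = particles a xi sg x0 N h dW k in
      z + h *\<^sub>R a (z, (\<Sum>j<N. xi (z, X j)) / real N) + sg z *v dB k)"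

text \<open>omega (i,k,c): standard Gaussian for Brownian motion i (i<N: W^(i+1); i=N: B),
  fine step k (of size Delta l), coordinate c.\<close>
definition noise_space :: "nat \<Rightarrow> nat \<Rightarrow> (nat \<times> nat \<times> 'd::finite \<Rightarrow> real) measure" where
  "noise_space n N = PiM ({..N} \<times> {..<n} \<times> UNIV) (\<lambda>_. density lborel std_normal_density)"

definition incr_f :: "nat \<Rightarrow> (nat \<times> nat \<times> 'd::finite \<Rightarrow> real) \<Rightarrow> nat \<Rightarrow> nat \<Rightarrow> real^'d" where
  "incr_f l \<omega> i k = (\<chi> c. sqrt (Delta l) * \<omega> (i, k, c))"

definition incr_c :: "nat \<Rightarrow> (nat \<times> nat \<times> 'd::finite \<Rightarrow> real) \<Rightarrow> nat \<Rightarrow> nat \<Rightarrow> real^'d" where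
  "incr_c l \<omega> i k = incr_f l \<omega> i (2*k) + incr_f l \<omega> i (2*k+1)"

text \<open>Values of (Z^l, tilde Z^{l-1}) at integer times; time tix t corresponds to index t.\<close>
definition coupled_pair ::
  "(real^'p \<Rightarrow> (real^'d) \<times> real \<Rightarrow> real^'d) \<Rightarrow> (real^'p \<Rightarrow> (real^'d) \<times> (real^'d) \<Rightarrow> real) \<Rightarrow>
   (real^'d \<Rightarrow> real^'d^'d) \<Rightarrow> real^'d \<Rightarrow> ('t::finite \<Rightarrow> nat) \<Rightarrow> nat \<Rightarrow> nat \<Rightarrow> real^'p \<Rightarrow>
   (nat \<times> nat \<times> 'd::finite \<Rightarrow> real) \<Rightarrow> (real^'d^'t) \<times> (real^'d^'t)" where
  "coupled_pair a xi sg x0 tix l N \<theta> \<omega> =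
    ((\<chi> t. driven (a \<theta>) (xi \<theta>) sg x0 N (Delta l) (incr_f l \<omega>) (incr_f l \<omega> N) (tix t * 2^l)),
     (\<chi> t. driven (a \<theta>) (xi \<theta>) sg x0 N (Delta (l-1)) (incr_c l \<omega>) (incr_c l \<omega> N) (tix t * 2^(l-1))))"

definition Hk :: "(real^'p \<Rightarrow> real^'d \<Rightarrow> 'y \<Rightarrow> real) \<Rightarrow> 'y \<Rightarrow> real^'p \<Rightarrow> real^'d \<Rightarrow> real^'d \<Rightarrow> real" where
  "Hk G yk \<theta> x x' = (G \<theta> x yk + G \<theta> x' yk) / 2"

definition Hchk :: "(real^'p \<Rightarrow> real^'d \<Rightarrow> 'y \<Rightarrow> real) \<Rightarrow> 'y \<Rightarrow> real^'p \<Rightarrow> real^'d \<Rightarrow> real^'d \<Rightarrow> real" where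
  "Hchk G yk \<theta> x x' = G \<theta> x yk / Hk G yk \<theta> x x'"

definition Hprod :: "(real^'p \<Rightarrow> real^'d \<Rightarrow> 'y \<Rightarrow> real) \<Rightarrow> (nat \<Rightarrow> 'y) \<Rightarrow> ('t::finite \<Rightarrow> nat) \<Rightarrow>
    real^'p \<Rightarrow> real^'d^'t \<Rightarrow> real^'d^'t \<Rightarrow> real" where
  "Hprod G y tix \<theta> x x' = (\<Prod>t\<in>UNIV. Hk G (y (tix t)) \<theta> (x $ t) (x' $ t))"

definition pi_unnorm ::
  "(real^'p) set \<Rightarrow> (real^'p \<Rightarrow> real) \<Rightarrow> (real^'p \<Rightarrow> (real^'d) \<times> real \<Rightarrow> real^'d) \<Rightarrow>
   (real^'p \<Rightarrow> (real^'d) \<times> (real^'d) \<Rightarrow> real) \<Rightarrow> (real^'d \<Rightarrow> real^'d^'d) \<Rightarrow> real^'d \<Rightarrow>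
   (real^'p \<Rightarrow> real^'d \<Rightarrow> 'y \<Rightarrow> real) \<Rightarrow> (nat \<Rightarrow> 'y) \<Rightarrow> ('t::finite \<Rightarrow> nat) \<Rightarrow> nat \<Rightarrow> nat \<Rightarrow>
   (real^'p \<Rightarrow> real^'d^'t \<Rightarrow> real^'d^'t \<Rightarrow> real) \<Rightarrow> real" where
  "pi_unnorm \<Theta> \<nu> a xi sg x0 G y tix l N f =
    (LINT \<theta>:\<Theta>|lborel. \<nu> \<theta> *
       (\<integral>\<omega>. (case coupled_pair a xi sg x0 tix l N \<theta> \<omega> of (x, x') \<Rightarrow>
                 f \<theta> x x' * Hprod G y tix \<theta> x x')
         \<partial>(noise_space (CARD('t) * 2^l) N :: (nat \<times> nat \<times> 'd \<Rightarrow> real) measure)))"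

text \<open>Integral of f against the probability measure check-pi^{l,N}.\<close>
definition check_pi ::
  "(real^'p) set \<Rightarrow> (real^'p \<Rightarrow> real) \<Rightarrow> (real^'p \<Rightarrow> (real^'d) \<times> real \<Rightarrow> real^'d) \<Rightarrow>
   (real^'p \<Rightarrow> (real^'d) \<times> (real^'d) \<Rightarrow> real) \<Rightarrow> (real^'d \<Rightarrow> real^'d^'d) \<Rightarrow> real^'d \<Rightarrow>
   (real^'p \<Rightarrow> real^'d \<Rightarrow> 'y \<Rightarrow> real) \<Rightarrow> (nat \<Rightarrow> 'y) \<Rightarrow> ('t::finite \<Rightarrow> nat) \<Rightarrow> nat \<Rightarrow> nat \<Rightarrow>
   (real^'p \<Rightarrow> real^'d^'t \<Rightarrow> real^'d^'t \<Rightarrow> real) \<Rightarrow> real" where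
  "check_pi \<Theta> \<nu> a xi sg x0 G y tix l N f =
     pi_unnorm \<Theta> \<nu> a xi sg x0 G y tix l N f / pi_unnorm \<Theta> \<nu> a xi sg x0 G y tix l N (\<lambda>_ _ _. 1)"

end

theory Submission
  imports Defs
begin

abbreviation Nd :: "real measure" where "Nd \<equiv> density lborel std_normal_density"

lemma prob_Nd: "prob_space Nd"
  by (rule prob_space_normal_density) simp

lemma space_Nd[simp]: "space Nd = UNIV" by simp
lemma sets_Nd[simp]: "sets Nd = sets borel" by simp

lemma integrable_Nd_pow: "integrable Nd (\<lambda>x. x ^ k)"
  by (subst integrable_density) (auto simp: integrable_std_normal_moment)

lemma integral_Nd_x: "(\<integral>x. x \<partial>Nd) = 0"
proof -
  have "(\<integral>x. x \<partial>Nd) = (\<integral>x. std_normal_density x * x ^ (2*0+1) \<partial>lborel)"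
    by (subst integral_density) auto
  also have "\<dots> = 0" by (rule integral_std_normal_moment_odd)
  finally show ?thesis .
qed

lemma integral_Nd_x2: "(\<integral>x. x^2 \<partial>Nd) = 1"
proof -
  have "(\<integral>x. x^2 \<partial>Nd) = (\<integral>x. std_normal_density x * x ^ (2*1) \<partial>lborel)"
    by (subst integral_density) auto
  also have "\<dots> = 1" by (subst integral_std_normal_moment_even) simp
  finally show ?thesis .
qed

definition Iset :: "nat \<Rightarrow> nat \<Rightarrow> (nat \<times> nat \<times> 'd::finite) set" where
  "Iset n N = {..N} \<times> {..<n} \<times> UNIV"

lemma noise_space_eq: "noise_space n N = PiM (Iset n N) (\<lambda>_. Nd)"
  unfolding noise_space_def Iset_def ..

lemma prob_noise: "prob_space (noise_space n N)"
  unfolding noise_space_def by (intro prob_space_PiM prob_Nd)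

lemma distr_noise_comp:
  fixes x :: "nat \<times> nat \<times> 'd::finite"
  assumes "x \<in> Iset n N"
  shows "distr (noise_space n N) Nd (\<lambda>\<omega>. \<omega> x) = Nd"
  unfolding noise_space_eq by (rule distr_PiM_component[OF prob_Nd assms])

lemma integrable_noise_comp:
  fixes g :: "real \<Rightarrow> real" and x :: "nat \<times> nat \<times> 'd::finite"
  assumes "x \<in> Iset n N" "integrable Nd g"
  shows "integrable (noise_space n N) (\<lambda>\<omega>. g (\<omega> x))"
proof -
  have m: "(\<lambda>\<omega>. \<omega> x) \<in> measurable (noise_space n N) Nd"
    unfolding noise_space_eq using assms(1) by (rule measurable_component_singleton)
  have "integrable (distr (noise_space n N) Nd (\<lambda>\<omega>. \<omega> x)) g"
    unfolding distr_noise_comp[OF assms(1)] by (rule assms(2))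
  moreover have gm: "g \<in> borel_measurable Nd" using assms(2) by (rule borel_measurable_integrable)
  ultimately show ?thesis using integrable_distr_eq[OF m gm] by simp
qed

lemma integral_noise_comp:
  fixes g :: "real \<Rightarrow> real" and x :: "nat \<times> nat \<times> 'd::finite"
  assumes "x \<in> Iset n N" "g \<in> borel_measurable borel"
  shows "(\<integral>\<omega>. g (\<omega> x) \<partial>noise_space n N) = (\<integral>y. g y \<partial>Nd)"
proof -
  have m: "(\<lambda>\<omega>. \<omega> x) \<in> measurable (noise_space n N) Nd"
    unfolding noise_space_eq using assms(1) by (rule measurable_component_singleton)
  have "(\<integral>y. g y \<partial>Nd) = (\<integral>y. g y \<partial>distr (noise_space n N) Nd (\<lambda>\<omega>. \<omega> x))"
    unfolding distr_noise_comp[OF assms(1)] ..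
  also have "\<dots> = (\<integral>\<omega>. g (\<omega> x) \<partial>noise_space n N)"
    using integral_distr[OF m, of g] assms(2) by simp
  finally show ?thesis by simp
qed

definition depends_on :: "('i \<Rightarrow> real) set \<Rightarrow> 'i set \<Rightarrow> (('i \<Rightarrow> real) \<Rightarrow> 'b) \<Rightarrow> bool" where
  "depends_on S A f \<longleftrightarrow> (\<forall>\<omega>\<in>S. \<forall>\<omega>'\<in>S. (\<forall>x\<in>A. \<omega> x = \<omega>' x) \<longrightarrow> f \<omega> = f \<omega>')"

definition extA :: "'i set \<Rightarrow> 'i set \<Rightarrow> ('i \<Rightarrow> real) \<Rightarrow> ('i \<Rightarrow> real)" where
  "extA I A \<omega>' = (\<lambda>x. if x \<in> A then \<omega>' x else if x \<in> I then 0 else undefined)"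

lemma extA_meas:
  assumes "A \<subseteq> I"
  shows "extA I A \<in> measurable (PiM A (\<lambda>_. Nd)) (PiM I (\<lambda>_. Nd))"
  unfolding extA_def
proof (rule measurable_PiM_single')
  fix i assume "i \<in> I"
  show "(\<lambda>\<omega>. if i \<in> A then \<omega> i else if i \<in> I then 0 else undefined) \<in> measurable (PiM A (\<lambda>_. Nd)) Nd"
    by (cases "i \<in> A") auto
qed (use assms in \<open>auto simp: PiE_def extensional_def\<close>)

lemma extA_restrict:
  assumes "A \<subseteq> I" "\<omega> \<in> space (PiM I (\<lambda>_. Nd))"
  shows "\<forall>x\<in>A. extA I A (restrict \<omega> A) x = \<omega> x"
    and "extA I A (restrict \<omega> A) \<in> space (PiM I (\<lambda>_. Nd))"
  using assms by (auto simp: extA_def space_PiM PiE_def extensional_def)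

lemma indep_coords:
  fixes I :: "'i set"
  assumes "I \<noteq> {}"
  shows "prob_space.indep_vars (PiM I (\<lambda>_. Nd)) (\<lambda>_. Nd) (\<lambda>x \<omega>. \<omega> x) I"
proof -
  interpret P: prob_space "PiM I (\<lambda>_. Nd)" by (intro prob_space_PiM prob_Nd)
  have "distr (PiM I (\<lambda>_. Nd)) (PiM I (\<lambda>_. Nd)) (\<lambda>\<omega>. \<lambda>x\<in>I. \<omega> x) = PiM I (\<lambda>_. Nd)"
  proof -
    have "distr (PiM I (\<lambda>_. Nd)) (PiM I (\<lambda>_. Nd)) (\<lambda>\<omega>. \<lambda>x\<in>I. \<omega> x) =
          distr (PiM I (\<lambda>_. Nd)) (PiM I (\<lambda>_. Nd)) (\<lambda>\<omega>. \<omega>)"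
      by (intro distr_cong) (auto simp: space_PiM PiE_def extensional_def restrict_def fun_eq_iff)
    also have "\<dots> = PiM I (\<lambda>_. Nd)" by (rule distr_id)
    finally show ?thesis .
  qed
  moreover have "PiM I (\<lambda>x. distr (PiM I (\<lambda>_. Nd)) Nd (\<lambda>\<omega>. \<omega> x)) = PiM I (\<lambda>_. Nd)"
    by (intro PiM_cong refl distr_PiM_component prob_Nd) auto
  ultimately show ?thesis
    by (subst P.indep_vars_iff_distr_eq_PiM'[OF assms]) auto
qed

lemma indep_mult:
  fixes I :: "'i set" and f g :: "('i \<Rightarrow> real) \<Rightarrow> real"
  assumes Ine: "I \<noteq> {}" and AI: "A \<subseteq> I" and BI: "B \<subseteq> I" and AB: "A \<inter> B = {}"
    and fm: "f \<in> borel_measurable (PiM I (\<lambda>_. Nd))" and gm: "g \<in> borel_measurable (PiM I (\<lambda>_. Nd))"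
    and fd: "depends_on (space (PiM I (\<lambda>_. Nd))) A f" and gd: "depends_on (space (PiM I (\<lambda>_. Nd))) B g"
    and fi: "integrable (PiM I (\<lambda>_. Nd)) f" and gi: "integrable (PiM I (\<lambda>_. Nd)) g"
  shows "(\<integral>\<omega>. f \<omega> * g \<omega> \<partial>PiM I (\<lambda>_. Nd)) = (\<integral>\<omega>. f \<omega> \<partial>PiM I (\<lambda>_. Nd)) * (\<integral>\<omega>. g \<omega> \<partial>PiM I (\<lambda>_. Nd))"
    and "integrable (PiM I (\<lambda>_. Nd)) (\<lambda>\<omega>. f \<omega> * g \<omega>)"
proof -
  note False = Ine
  let ?M = "PiM I (\<lambda>_. Nd) :: ('i \<Rightarrow> real) measure"
  interpret P: prob_space ?M by (intro prob_space_PiM prob_Nd)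
  have iv: "P.indep_var (PiM A (\<lambda>_. Nd)) (\<lambda>\<omega>. restrict (\<lambda>i. \<omega> i) A) (PiM B (\<lambda>_. Nd)) (\<lambda>\<omega>. restrict (\<lambda>i. \<omega> i) B)"
    by (rule P.indep_var_restrict[OF indep_coords[OF False] AB AI BI])
  have fA: "f \<circ> extA I A \<in> borel_measurable (PiM A (\<lambda>_. Nd))"
    using fm extA_meas[OF AI] by (rule measurable_comp[rotated])
  have gB: "g \<circ> extA I B \<in> borel_measurable (PiM B (\<lambda>_. Nd))"
    using gm extA_meas[OF BI] by (rule measurable_comp[rotated])
  have iv2: "P.indep_var borel ((f \<circ> extA I A) \<circ> (\<lambda>\<omega>. restrict (\<lambda>i. \<omega> i) A))
                         borel ((g \<circ> extA I B) \<circ> (\<lambda>\<omega>. restrict (\<lambda>i. \<omega> i) B))"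
    by (rule P.indep_var_compose[OF iv fA gB])
  have feq: "((f \<circ> extA I A) \<circ> (\<lambda>\<omega>. restrict (\<lambda>i. \<omega> i) A)) \<omega> = f \<omega>" if w: "\<omega> \<in> space ?M" for \<omega>
  proof -
    have "f (extA I A (restrict \<omega> A)) = f \<omega>"
      using fd extA_restrict[OF AI w] w unfolding depends_on_def by blast
    then show ?thesis by simp
  qed
  have geq: "((g \<circ> extA I B) \<circ> (\<lambda>\<omega>. restrict (\<lambda>i. \<omega> i) B)) \<omega> = g \<omega>" if w: "\<omega> \<in> space ?M" for \<omega>
  proof -
    have "g (extA I B (restrict \<omega> B)) = g \<omega>"
      using gd extA_restrict[OF BI w] w unfolding depends_on_def by blast
    then show ?thesis by simp
  qed
  let ?F = "(f \<circ> extA I A) \<circ> (\<lambda>\<omega>. restrict (\<lambda>i. \<omega> i) A)"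
  let ?G = "(g \<circ> extA I B) \<circ> (\<lambda>\<omega>. restrict (\<lambda>i. \<omega> i) B)"
  have Fi: "integrable ?M ?F"
    by (rule Bochner_Integration.integrable_cong[THEN iffD2, OF refl _ fi]) (rule feq)
  have Gi: "integrable ?M ?G"
    by (rule Bochner_Integration.integrable_cong[THEN iffD2, OF refl _ gi]) (rule geq)
  have "(\<integral>\<omega>. ?F \<omega> * ?G \<omega> \<partial>?M) = (\<integral>\<omega>. ?F \<omega> \<partial>?M) * (\<integral>\<omega>. ?G \<omega> \<partial>?M)"
    by (rule P.indep_var_lebesgue_integral[OF iv2 Fi Gi])
  moreover have "(\<integral>\<omega>. ?F \<omega> * ?G \<omega> \<partial>?M) = (\<integral>\<omega>. f \<omega> * g \<omega> \<partial>?M)"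
    by (intro Bochner_Integration.integral_cong refl) (simp only: feq geq)
  moreover have "(\<integral>\<omega>. ?F \<omega> \<partial>?M) = (\<integral>\<omega>. f \<omega> \<partial>?M)"
    by (intro Bochner_Integration.integral_cong refl) (simp only: feq)
  moreover have "(\<integral>\<omega>. ?G \<omega> \<partial>?M) = (\<integral>\<omega>. g \<omega> \<partial>?M)"
    by (intro Bochner_Integration.integral_cong refl) (simp only: geq)
  ultimately show "(\<integral>\<omega>. f \<omega> * g \<omega> \<partial>PiM I (\<lambda>_. Nd)) = (\<integral>\<omega>. f \<omega> \<partial>PiM I (\<lambda>_. Nd)) * (\<integral>\<omega>. g \<omega> \<partial>PiM I (\<lambda>_. Nd))" by simp
  have "integrable ?M (\<lambda>\<omega>. ?F \<omega> * ?G \<omega>)"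
    by (rule P.indep_var_integrable[OF iv2 Fi Gi])
  then show "integrable ?M (\<lambda>\<omega>. f \<omega> * g \<omega>)"
    by (rule Bochner_Integration.integrable_cong[THEN iffD1, OF refl, rotated]) (simp only: feq geq)
qed


lemma coord_meas: "(\<lambda>\<omega>. \<omega> x) \<in> borel_measurable (PiM I (\<lambda>_. Nd))"
proof (cases "x \<in> I")
  case True
  have "(\<lambda>\<omega>. \<omega> x) \<in> measurable (PiM I (\<lambda>_. Nd)) Nd" by (rule measurable_component_singleton[OF True])
  then show ?thesis by (simp add: measurable_def)
next
  case False
  have "(\<lambda>\<omega>. undefined) \<in> borel_measurable (PiM I (\<lambda>_. Nd))" by simp
  moreover have "\<And>\<omega>. \<omega> \<in> space (PiM I (\<lambda>_. Nd)) \<Longrightarrow> undefined = \<omega> x"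
    using False by (auto simp: space_PiM PiE_def extensional_def)
  ultimately show ?thesis by (rule measurable_cong[THEN iffD1, rotated])
qed

lemma vec_meas:
  fixes f :: "'c::finite \<Rightarrow> 'a \<Rightarrow> real"
  assumes "\<And>c. f c \<in> borel_measurable M"
  shows "(\<lambda>\<omega>. \<chi> c. f c \<omega>) \<in> borel_measurable M"
proof (subst borel_measurable_euclidean_space, intro ballI)
  fix b :: "real^'c" assume "b \<in> Basis"
  then obtain c where b: "b = axis c 1" unfolding Basis_vec_def by auto
  show "(\<lambda>\<omega>. (\<chi> c. f c \<omega>) \<bullet> b) \<in> borel_measurable M"
    unfolding b inner_axis using assms by simp
qed

definition Yp :: "((real^'d) \<times> real \<Rightarrow> real^'d) \<Rightarrow> ((real^'d) \<times> (real^'d) \<Rightarrow> real) \<Rightarrow>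
    (real^'d \<Rightarrow> real^'d^'d) \<Rightarrow> real^'d \<Rightarrow> nat \<Rightarrow> real \<Rightarrow> (nat \<Rightarrow> nat \<Rightarrow> real^'d) \<Rightarrow>
    nat \<Rightarrow> nat \<Rightarrow> real^'d" where
  "Yp a xi sg x0 N h dW k i = (if i < N then particles a xi sg x0 N h dW k i else driven a xi sg x0 N h dW (dW N) k)"

definition mf :: "((real^'d) \<times> (real^'d) \<Rightarrow> real) \<Rightarrow> nat \<Rightarrow> (nat \<Rightarrow> real^'d) \<Rightarrow> real^'d \<Rightarrow> real" where
  "mf xi N U u = (\<Sum>j<N. xi (u, U j)) / real N"

definition stepf :: "((real^'d) \<times> real \<Rightarrow> real^'d) \<Rightarrow> ((real^'d) \<times> (real^'d) \<Rightarrow> real) \<Rightarrow>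
    (real^'d \<Rightarrow> real^'d^'d) \<Rightarrow> nat \<Rightarrow> real \<Rightarrow> (nat \<Rightarrow> real^'d) \<Rightarrow> real^'d \<Rightarrow> real^'d \<Rightarrow> real^'d" where
  "stepf a xi sg N h U u \<beta> = u + h *\<^sub>R a (u, mf xi N U u) + sg u *v \<beta>"

lemma Yp_0: "Yp a xi sg x0 N h dW 0 i = x0"
  by (simp add: Yp_def)

lemma Yp_Suc:
  assumes "i \<le> N"
  shows "Yp a xi sg x0 N h dW (Suc k) i = stepf a xi sg N h (Yp a xi sg x0 N h dW k) (Yp a xi sg x0 N h dW k i) (dW i k)"
proof -
  have sumeq: "(\<Sum>j<N. xi (u, particles a xi sg x0 N h dW k j)) = (\<Sum>j<N. xi (u, Yp a xi sg x0 N h dW k j))" for u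
    by (intro sum.cong) (auto simp: Yp_def)
  show ?thesis
  proof (cases "i < N")
    case True
    then show ?thesis using sumeq by (simp add: Yp_def stepf_def mf_def Let_def)
  next
    case False
    then have "i = N" using assms by simp
    then show ?thesis using sumeq False by (simp add: Yp_def stepf_def mf_def Let_def)
  qed
qed

lemma Yp_dep:
  assumes "\<And>i k'. i \<le> N \<Longrightarrow> k' < k \<Longrightarrow> dW i k' = dW' i k'"
  shows "i \<le> N \<Longrightarrow> Yp a xi sg x0 N h dW k i = Yp a xi sg x0 N h dW' k i"
  using assms
proof (induction k arbitrary: i)
  case 0
  then show ?case by (simp add: Yp_0)
next
  case (Suc k)
  have IH: "\<And>j. j \<le> N \<Longrightarrow> Yp a xi sg x0 N h dW k j = Yp a xi sg x0 N h dW' k j"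
    using Suc.IH Suc.prems(2) by simp
  have "Yp a xi sg x0 N h dW k = Yp a xi sg x0 N h dW' k \<or> True" by simp
  have mfeq: "mf xi N (Yp a xi sg x0 N h dW k) u = mf xi N (Yp a xi sg x0 N h dW' k) u" for u
    unfolding mf_def by (intro arg_cong[where f="\<lambda>s. s / real N"] sum.cong) (auto simp: IH)
  show ?case
    using Suc.prems by (simp add: Yp_Suc stepf_def IH mfeq)
qed


lemma nth_meas: "(f::'a \<Rightarrow> 'b::real_normed_vector^'c) \<in> borel_measurable M \<Longrightarrow> (\<lambda>\<omega>. f \<omega> $ c) \<in> borel_measurable M"
  by (rule borel_measurable_continuous_on[of "\<lambda>x. x $ c"]) (auto intro: continuous_intros)

lemma mv_meas:
  fixes A :: "'a \<Rightarrow> real^'d::finite^'e::finite" and x :: "'a \<Rightarrow> real^'d"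
  assumes "A \<in> borel_measurable M" "x \<in> borel_measurable M"
  shows "(\<lambda>\<omega>. A \<omega> *v x \<omega>) \<in> borel_measurable M"
proof -
  have "(\<lambda>\<omega>. A \<omega> *v x \<omega>) = (\<lambda>\<omega>. \<chi> r. \<Sum>c\<in>UNIV. A \<omega> $ r $ c * x \<omega> $ c)"
    by (simp add: matrix_vector_mult_def)
  also have "\<dots> \<in> borel_measurable M"
    by (intro vec_meas borel_measurable_sum borel_measurable_times nth_meas assms)
  finally show ?thesis .
qed

lemma cont_meas2:
  fixes f :: "'b::{second_countable_topology,topological_space} \<times> 'c::{second_countable_topology,topological_space} \<Rightarrow> 'e::{second_countable_topology,topological_space}"
  assumes "continuous_on UNIV f" "u \<in> borel_measurable M" "v \<in> borel_measurable M"
  shows "(\<lambda>\<omega>. f (u \<omega>, v \<omega>)) \<in> borel_measurable M"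
  by (rule borel_measurable_continuous_on[OF assms(1)]) (intro borel_measurable_Pair assms(2,3))

lemma Yp_meas:
  assumes ca: "continuous_on UNIV a" and cx: "continuous_on UNIV xi" and cs: "continuous_on UNIV sg"
    and dm: "\<And>i k. (\<lambda>\<omega>. dW \<omega> i k) \<in> borel_measurable M"
  shows "i \<le> N \<Longrightarrow> (\<lambda>\<omega>. Yp a xi sg x0 N h (dW \<omega>) k i) \<in> borel_measurable M"
proof (induction k arbitrary: i)
  case 0
  then show ?case by (simp add: Yp_0)
next
  case (Suc k)
  have mfm: "(\<lambda>\<omega>. mf xi N (Yp a xi sg x0 N h (dW \<omega>) k) (Yp a xi sg x0 N h (dW \<omega>) k i)) \<in> borel_measurable M"
    unfolding mf_def
    by (intro borel_measurable_divide borel_measurable_sum cont_meas2[OF cx] Suc.IH Suc.prems borel_measurable_const) auto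
  show ?case
    unfolding Yp_Suc[OF Suc.prems] stepf_def
    by (intro borel_measurable_add borel_measurable_scaleR cont_meas2[OF ca] mv_meas
          borel_measurable_continuous_on[OF cs] Suc.IH Suc.prems mfm dm borel_measurable_const)
qed


definition sqint :: "'a measure \<Rightarrow> ('a \<Rightarrow> 'b::real_normed_vector) \<Rightarrow> bool" where
  "sqint M f \<longleftrightarrow> f \<in> borel_measurable M \<and> integrable M (\<lambda>\<omega>. (norm (f \<omega>))\<^sup>2)"

lemma sqintD: "sqint M f \<Longrightarrow> f \<in> borel_measurable M" "sqint M f \<Longrightarrow> integrable M (\<lambda>\<omega>. (norm (f \<omega>))\<^sup>2)"
  by (auto simp: sqint_def)

lemma sq_sum_le: "((x::real) + y)\<^sup>2 \<le> 2 * x\<^sup>2 + 2 * y\<^sup>2"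
proof -
  have "0 \<le> (x - y)\<^sup>2" by simp
  moreover have "(x+y)\<^sup>2 = x\<^sup>2+y\<^sup>2+2*x*y" "(x-y)\<^sup>2 = x\<^sup>2+y\<^sup>2-2*x*y"
    by (simp_all add: power2_eq_square algebra_simps)
  ultimately show ?thesis by linarith
qed

lemma prod_le_sq: "(x::real) * y \<le> x\<^sup>2 + y\<^sup>2"
proof -
  have "0 \<le> (x - y)\<^sup>2" "0 \<le> (x + y)\<^sup>2" by simp_all
  moreover have "(x+y)\<^sup>2 = x\<^sup>2+y\<^sup>2+2*x*y" "(x-y)\<^sup>2 = x\<^sup>2+y\<^sup>2-2*x*y"
    by (simp_all add: power2_eq_square algebra_simps)
  ultimately show ?thesis by linarith
qed

lemma sqint_dom:
  fixes f :: "'a \<Rightarrow> 'b::real_normed_vector" and g :: "'a \<Rightarrow> 'c::real_normed_vector"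
  assumes "f \<in> borel_measurable M" "sqint M g" "\<And>\<omega>. \<omega> \<in> space M \<Longrightarrow> norm (f \<omega>) \<le> c * norm (g \<omega>)"
  shows "sqint M f"
  unfolding sqint_def
proof
  show "f \<in> borel_measurable M" by fact
  have gi: "integrable M (\<lambda>\<omega>. c\<^sup>2 * (norm (g \<omega>))\<^sup>2)" using sqintD(2)[OF assms(2)] by simp
  show "integrable M (\<lambda>\<omega>. (norm (f \<omega>))\<^sup>2)"
  proof (rule Bochner_Integration.integrable_bound[OF gi])
    show "(\<lambda>\<omega>. (norm (f \<omega>))\<^sup>2) \<in> borel_measurable M" using assms(1) by measurable
    show "AE \<omega> in M. norm ((norm (f \<omega>))\<^sup>2) \<le> norm (c\<^sup>2 * (norm (g \<omega>))\<^sup>2)"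
    proof (rule AE_I2)
      fix \<omega> assume w: "\<omega> \<in> space M"
      have "norm (f \<omega>) \<le> \<bar>c\<bar> * norm (g \<omega>)" using assms(3)[OF w] by (meson abs_ge_self mult_right_mono norm_ge_zero order_trans)
      then have "(norm (f \<omega>))\<^sup>2 \<le> (\<bar>c\<bar> * norm (g \<omega>))\<^sup>2" by (intro power_mono) auto
      then show "norm ((norm (f \<omega>))\<^sup>2) \<le> norm (c\<^sup>2 * (norm (g \<omega>))\<^sup>2)"
        by (simp add: power_mult_distrib)
    qed
  qed
qed

lemma (in prob_space) sqint_const: "sqint M (\<lambda>_. c)"
  unfolding sqint_def by simp

lemma sqint_add:
  fixes f g :: "'a \<Rightarrow> 'b::euclidean_space"
  assumes "sqint M f" "sqint M g"
  shows "sqint M (\<lambda>\<omega>. f \<omega> + g \<omega>)"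
  unfolding sqint_def
proof
  show m: "(\<lambda>\<omega>. f \<omega> + g \<omega>) \<in> borel_measurable M" using assms unfolding sqint_def by (auto intro!: borel_measurable_add)
  have gi: "integrable M (\<lambda>\<omega>. 2 * (norm (f \<omega>))\<^sup>2 + 2 * (norm (g \<omega>))\<^sup>2)" using assms by (simp add: sqint_def)
  show "integrable M (\<lambda>\<omega>. (norm (f \<omega> + g \<omega>))\<^sup>2)"
  proof (rule Bochner_Integration.integrable_bound[OF gi])
    show "(\<lambda>\<omega>. (norm (f \<omega> + g \<omega>))\<^sup>2) \<in> borel_measurable M" using m by measurable
    show "AE \<omega> in M. norm ((norm (f \<omega> + g \<omega>))\<^sup>2) \<le> norm (2 * (norm (f \<omega>))\<^sup>2 + 2 * (norm (g \<omega>))\<^sup>2)"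
    proof (rule AE_I2)
      fix \<omega>
      have "norm (f \<omega> + g \<omega>) \<le> norm (f \<omega>) + norm (g \<omega>)" by (rule norm_triangle_ineq)
      then have "(norm (f \<omega> + g \<omega>))\<^sup>2 \<le> (norm (f \<omega>) + norm (g \<omega>))\<^sup>2" by (intro power_mono) auto
      also have "\<dots> \<le> 2 * (norm (f \<omega>))\<^sup>2 + 2 * (norm (g \<omega>))\<^sup>2"
        by (rule sq_sum_le)
      finally show "norm ((norm (f \<omega> + g \<omega>))\<^sup>2) \<le> norm (2 * (norm (f \<omega>))\<^sup>2 + 2 * (norm (g \<omega>))\<^sup>2)" by simp
    qed
  qed
qed

lemma sqint_scaleR:
  fixes f :: "'a \<Rightarrow> 'b::euclidean_space"
  assumes "sqint M f" shows "sqint M (\<lambda>\<omega>. c *\<^sub>R f \<omega>)"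
  using assms unfolding sqint_def by (auto simp: power_mult_distrib intro!: borel_measurable_scaleR)

lemma sqint_uminus:
  fixes f :: "'a \<Rightarrow> 'b::euclidean_space"
  assumes "sqint M f" shows "sqint M (\<lambda>\<omega>. - f \<omega>)"
  using assms unfolding sqint_def by (auto intro!: borel_measurable_uminus)

lemma sqint_diff:
  fixes f g :: "'a \<Rightarrow> 'b::euclidean_space"
  assumes "sqint M f" "sqint M g"
  shows "sqint M (\<lambda>\<omega>. f \<omega> - g \<omega>)"
  using sqint_add[OF assms(1) sqint_uminus[OF assms(2)]] by simp

lemma (in prob_space) sqint_bounded:
  fixes f :: "'a \<Rightarrow> 'b::euclidean_space"
  assumes "f \<in> borel_measurable M" "\<And>\<omega>. \<omega> \<in> space M \<Longrightarrow> norm (f \<omega>) \<le> c"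
  shows "sqint M f"
  by (rule sqint_dom[OF assms(1) sqint_const[of "1::real"], of c]) (use assms(2) in simp)

lemma (in prob_space) sqint_integrable_norm:
  fixes f :: "'a \<Rightarrow> 'b::euclidean_space"
  assumes "sqint M f" shows "integrable M (\<lambda>\<omega>. norm (f \<omega>))"
proof (rule Bochner_Integration.integrable_bound)
  show "integrable M (\<lambda>\<omega>. 1 + (norm (f \<omega>))\<^sup>2)" using assms by (simp add: sqint_def)
  show "(\<lambda>\<omega>. norm (f \<omega>)) \<in> borel_measurable M" using assms unfolding sqint_def by (auto intro!: borel_measurable_norm)
  show "AE \<omega> in M. norm (norm (f \<omega>)) \<le> norm (1 + (norm (f \<omega>))\<^sup>2)"
    by (rule AE_I2) (simp, smt (verit) power2_eq_square mult_le_cancel_left1 norm_ge_zero power2_less_0 zero_le_power2 sum_power2_ge_zero)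
qed

lemma integrable_inner_sq:
  fixes f g :: "'a \<Rightarrow> 'b::euclidean_space"
  assumes "sqint M f" "sqint M g"
  shows "integrable M (\<lambda>\<omega>. f \<omega> \<bullet> g \<omega>)"
proof (rule Bochner_Integration.integrable_bound)
  show "integrable M (\<lambda>\<omega>. (norm (f \<omega>))\<^sup>2 + (norm (g \<omega>))\<^sup>2)" using assms by (simp add: sqint_def)
  show "(\<lambda>\<omega>. f \<omega> \<bullet> g \<omega>) \<in> borel_measurable M" using assms unfolding sqint_def by (auto intro!: borel_measurable_inner)
  show "AE \<omega> in M. norm (f \<omega> \<bullet> g \<omega>) \<le> norm ((norm (f \<omega>))\<^sup>2 + (norm (g \<omega>))\<^sup>2)"
  proof (rule AE_I2)
    fix \<omega>
    have "\<bar>f \<omega> \<bullet> g \<omega>\<bar> \<le> norm (f \<omega>) * norm (g \<omega>)" by (rule Cauchy_Schwarz_ineq2)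
    also have "\<dots> \<le> (norm (f \<omega>))\<^sup>2 + (norm (g \<omega>))\<^sup>2"
      by (rule prod_le_sq)
    finally show "norm (f \<omega> \<bullet> g \<omega>) \<le> norm ((norm (f \<omega>))\<^sup>2 + (norm (g \<omega>))\<^sup>2)" by simp
  qed
qed

lemma sqint_norm2: "sqint M f \<Longrightarrow> integrable M (\<lambda>\<omega>. (norm (f \<omega>))\<^sup>2)"
  by (simp add: sqint_def)


lemma dep_comp1: "depends_on S A f \<Longrightarrow> depends_on S A (\<lambda>\<omega>. H (f \<omega>))"
  unfolding depends_on_def by metis

lemma dep_comp2: "depends_on S A f \<Longrightarrow> depends_on S A g \<Longrightarrow> depends_on S A (\<lambda>\<omega>. H (f \<omega>) (g \<omega>))"
  unfolding depends_on_def by metis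

lemma dep_mono: "depends_on S A f \<Longrightarrow> A \<subseteq> B \<Longrightarrow> depends_on S B f"
  unfolding depends_on_def by blast

lemma norm2_vec: "(norm (v::real^'n::finite))\<^sup>2 = (\<Sum>r\<in>UNIV. (v $ r)\<^sup>2)"
  unfolding power2_norm_eq_inner inner_vec_def by (simp add: power2_eq_square)

lemma norm2_vec2: "(norm (v::real^'n::finite^'m::finite))\<^sup>2 = (\<Sum>r\<in>UNIV. (norm (v $ r))\<^sup>2)"
  unfolding power2_norm_eq_inner inner_vec_def ..

lemma norm_mv_le: "norm ((A::real^'n::finite^'m::finite) *v x) \<le> norm A * norm x"
proof -
  have row: "(A *v x) $ r = A $ r \<bullet> x" for r
    by (simp add: matrix_vector_mult_def inner_vec_def)
  have "(norm (A *v x))\<^sup>2 = (\<Sum>r\<in>UNIV. ((A *v x) $ r)\<^sup>2)"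
    by (rule norm2_vec)
  also have "\<dots> \<le> (\<Sum>r\<in>UNIV. (norm (A $ r))\<^sup>2 * (norm x)\<^sup>2)"
  proof (rule sum_mono)
    fix r
    have "\<bar>A $ r \<bullet> x\<bar> \<le> norm (A $ r) * norm x" by (rule Cauchy_Schwarz_ineq2)
    then have "(A $ r \<bullet> x)\<^sup>2 \<le> (norm (A $ r) * norm x)\<^sup>2"
      by (metis abs_ge_zero power2_abs power_mono)
    then show "((A *v x) $ r)\<^sup>2 \<le> (norm (A $ r))\<^sup>2 * (norm x)\<^sup>2" by (simp add: row power_mult_distrib)
  qed
  also have "\<dots> = (norm A)\<^sup>2 * (norm x)\<^sup>2"
    by (simp add: norm2_vec2 sum_distrib_right)
  also have "\<dots> = (norm A * norm x)\<^sup>2" by (simp add: power_mult_distrib)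
  finally show ?thesis
    by (meson mult_nonneg_nonneg norm_ge_zero power2_le_imp_le)
qed

locale scheme =
  fixes a :: "(real^'d::finite) \<times> real \<Rightarrow> real^'d" and xi :: "(real^'d) \<times> (real^'d) \<Rightarrow> real"
    and sg :: "real^'d \<Rightarrow> real^'d^'d" and x0 :: "real^'d" and N :: nat and l :: nat and n :: nat and K :: real
  assumes N1: "1 \<le> N" and l1: "1 \<le> l" and n1: "1 \<le> n" and K0: "0 \<le> K"
    and a_bd: "\<And>z. norm (a z) \<le> K" and a_lip: "\<And>z z'. norm (a z - a z') \<le> K * norm (z - z')"
    and xi_lip: "\<And>z z'. \<bar>xi z - xi z'\<bar> \<le> K * norm (z - z')"
    and sg_bd: "\<And>x. norm (sg x) \<le> K" and sg_lip: "\<And>x x'. norm (sg x - sg x') \<le> K * norm (x - x')"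
    and ca: "continuous_on UNIV a" and cx: "continuous_on UNIV xi" and cs: "continuous_on UNIV sg"
begin

abbreviation mu :: "(nat \<times> nat \<times> 'd \<Rightarrow> real) measure" where
  "mu \<equiv> PiM (Iset n N) (\<lambda>_. Nd)"

abbreviation h :: real where "h \<equiv> Delta l"

definition Xf :: "(nat \<times> nat \<times> 'd \<Rightarrow> real) \<Rightarrow> nat \<Rightarrow> nat \<Rightarrow> real^'d" where
  "Xf \<omega> k i = Yp a xi sg x0 N h (incr_f l \<omega>) k i"

definition Xc :: "(nat \<times> nat \<times> 'd \<Rightarrow> real) \<Rightarrow> nat \<Rightarrow> nat \<Rightarrow> real^'d" where
  "Xc \<omega> k i = Yp a xi sg x0 N (2*h) (incr_c l \<omega>) k i"

definition Past :: "nat \<Rightarrow> (nat \<times> nat \<times> 'd) set" where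
  "Past m = {x \<in> Iset n N. fst (snd x) < m}"

definition Cur :: "nat \<Rightarrow> nat \<Rightarrow> (nat \<times> nat \<times> 'd) set" where
  "Cur i m = {x \<in> Iset n N. fst x = i \<and> fst (snd x) = m}"

lemma prob_mu: "prob_space mu" by (intro prob_space_PiM prob_Nd)

sublocale P: prob_space mu by (rule prob_mu)

lemma Iset_ne: "Iset n N \<noteq> (({}) :: (nat \<times> nat \<times> 'd) set)"
  using n1 unfolding Iset_def by (auto simp: lessThan_empty_iff)

lemma h_pos: "0 < h" and h_le1: "h \<le> 1"
  unfolding Delta_def by (simp_all add: power_le_one)

lemma incr_f_meas: "(\<lambda>\<omega>. incr_f l \<omega> i k) \<in> borel_measurable mu"
  unfolding incr_f_def by (intro vec_meas borel_measurable_times borel_measurable_const coord_meas)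

lemma incr_c_meas: "(\<lambda>\<omega>. incr_c l \<omega> i k) \<in> borel_measurable mu"
  unfolding incr_c_def by (intro borel_measurable_add incr_f_meas)

lemma Xf_meas: "i \<le> N \<Longrightarrow> (\<lambda>\<omega>. Xf \<omega> k i) \<in> borel_measurable mu"
  unfolding Xf_def by (rule Yp_meas[OF ca cx cs incr_f_meas])

lemma Xc_meas: "i \<le> N \<Longrightarrow> (\<lambda>\<omega>. Xc \<omega> k i) \<in> borel_measurable mu"
  unfolding Xc_def by (rule Yp_meas[OF ca cx cs incr_c_meas])

lemma norm2_incr_f: "(norm (incr_f l \<omega> i k))\<^sup>2 = h * (\<Sum>c\<in>UNIV. (\<omega> (i, k, c))\<^sup>2)"
  unfolding incr_f_def norm2_vec using h_pos
  by (simp add: sum_distrib_left power_mult_distrib)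

lemma incr_f_sqint:
  assumes "i \<le> N" "k < n"
  shows "sqint mu (\<lambda>\<omega>. incr_f l \<omega> i k)"
    and "(\<integral>\<omega>. (norm (incr_f l \<omega> i k))\<^sup>2 \<partial>mu) = h * CARD('d)"
proof -
  have mem: "(i, k, c) \<in> Iset n N" for c :: 'd using assms by (simp add: Iset_def)
  have ic: "integrable mu (\<lambda>\<omega>. (\<omega> (i, k, c))\<^sup>2)" for c :: 'd
    using integrable_noise_comp[OF mem integrable_Nd_pow[of 2]] unfolding noise_space_eq .
  have ec: "(\<integral>\<omega>. (\<omega> (i, k, c))\<^sup>2 \<partial>mu) = 1" for c :: 'd
    using integral_noise_comp[OF mem, of "\<lambda>y. y^2"] integral_Nd_x2 unfolding noise_space_eq by simp
  show "sqint mu (\<lambda>\<omega>. incr_f l \<omega> i k)"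
    unfolding sqint_def norm2_incr_f using incr_f_meas ic by auto
  show "(\<integral>\<omega>. (norm (incr_f l \<omega> i k))\<^sup>2 \<partial>mu) = h * CARD('d)"
    unfolding norm2_incr_f using ic ec by (simp add: Bochner_Integration.integral_sum)
qed

lemma incr_f_dep: "depends_on (space mu) (Cur i m) (\<lambda>\<omega>. incr_f l \<omega> i m)"
  unfolding depends_on_def Cur_def incr_f_def
proof (intro ballI impI)
  fix \<omega> \<omega>' :: "nat \<times> nat \<times> 'd \<Rightarrow> real"
  assume w: "\<omega> \<in> space mu" "\<omega>' \<in> space mu" and ag: "\<forall>x\<in>{x \<in> Iset n N. fst x = i \<and> fst (snd x) = m}. \<omega> x = \<omega>' x"
  have "\<omega> (i, m, c) = \<omega>' (i, m, c)" for c
  proof (cases "(i, m, c) \<in> Iset n N")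
    case True then show ?thesis using ag by auto
  next
    case False then show ?thesis using w by (auto simp: space_PiM PiE_def extensional_def)
  qed
  then show "(\<chi> c. sqrt (Delta l) * \<omega> (i, m, c)) = (\<chi> c. sqrt (Delta l) * \<omega>' (i, m, c))" by simp
qed

lemma agree_past:
  assumes w: "\<omega> \<in> space mu" "\<omega>' \<in> space mu" and ag: "\<forall>x\<in>Past m. \<omega> x = \<omega>' x" and k: "k < m"
  shows "\<omega> (i, k, c) = \<omega>' (i, k, c)"
proof (cases "(i, k, c) \<in> Iset n N")
  case True then show ?thesis using ag k by (auto simp: Past_def)
next
  case False then show ?thesis using w by (auto simp: space_PiM PiE_def extensional_def)
qed

lemma Xf_dep: "i \<le> N \<Longrightarrow> depends_on (space mu) (Past k) (\<lambda>\<omega>. Xf \<omega> k i)"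
  unfolding depends_on_def Xf_def
proof (intro ballI impI)
  fix \<omega> \<omega>' assume i: "i \<le> N" and w: "\<omega> \<in> space mu" "\<omega>' \<in> space mu" and ag: "\<forall>x\<in>Past k. \<omega> x = \<omega>' x"
  show "Yp a xi sg x0 N h (incr_f l \<omega>) k i = Yp a xi sg x0 N h (incr_f l \<omega>') k i"
  proof (rule Yp_dep[OF _ i])
    fix j k' assume "j \<le> N" "k' < k"
    then show "incr_f l \<omega> j k' = incr_f l \<omega>' j k'"
      unfolding incr_f_def using agree_past[OF w ag] by simp
  qed
qed

lemma Xc_dep: "i \<le> N \<Longrightarrow> depends_on (space mu) (Past (2*k)) (\<lambda>\<omega>. Xc \<omega> k i)"
  unfolding depends_on_def Xc_def
proof (intro ballI impI)
  fix \<omega> \<omega>' assume i: "i \<le> N" and w: "\<omega> \<in> space mu" "\<omega>' \<in> space mu" and ag: "\<forall>x\<in>Past (2*k). \<omega> x = \<omega>' x"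
  show "Yp a xi sg x0 N (2*h) (incr_c l \<omega>) k i = Yp a xi sg x0 N (2*h) (incr_c l \<omega>') k i"
  proof (rule Yp_dep[OF _ i])
    fix j k' assume "j \<le> N" "k' < k"
    then show "incr_c l \<omega> j k' = incr_c l \<omega>' j k'"
      unfolding incr_c_def incr_f_def using agree_past[OF w ag] by simp
  qed
qed

end


lemma comp_le_norm_mat: "\<bar>(G::real^'n::finite^'m::finite) $ r $ c\<bar> \<le> norm G"
proof -
  have "\<bar>G $ r $ c\<bar> \<le> norm (G $ r)" using component_le_norm_cart[of "G $ r" c] by simp
  also have "\<dots> \<le> norm G" by (rule Finite_Cartesian_Product.norm_nth_le)
  finally show ?thesis .
qed

context scheme
begin

lemma Past_sub: "Past m \<subseteq> Iset n N" and Cur_sub: "Cur i m \<subseteq> Iset n N"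
  and Past_Cur: "Past m \<inter> Cur i m = {}"
  by (auto simp: Past_def Cur_def)

lemma integral_sqrt_coord:
  assumes "i \<le> N" "m < n"
  shows "(\<integral>\<omega>. sqrt h * \<omega> (i, m, c) \<partial>mu) = 0"
    and "(\<integral>\<omega>. \<omega> (i, m, c) \<partial>mu) = 0"
    and "integrable mu (\<lambda>\<omega>. sqrt h * \<omega> (i, m, c))"
proof -
  have mem: "(i, m, c) \<in> Iset n N" using assms by (simp add: Iset_def)
  have "integrable mu (\<lambda>\<omega>. (\<omega> (i, m, c))^1)"
    using integrable_noise_comp[OF mem integrable_Nd_pow[of 1]] unfolding noise_space_eq .
  then show "integrable mu (\<lambda>\<omega>. sqrt h * \<omega> (i, m, c))" by simp
  show "(\<integral>\<omega>. \<omega> (i, m, c) \<partial>mu) = 0"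
    using integral_noise_comp[OF mem, of "\<lambda>y. y"] integral_Nd_x unfolding noise_space_eq by simp
  then show "(\<integral>\<omega>. sqrt h * \<omega> (i, m, c) \<partial>mu) = 0" by simp
qed

lemma orth:
  fixes F :: "_ \<Rightarrow> real^'d" and G :: "_ \<Rightarrow> real^'d^'d"
  assumes i: "i \<le> N" and m: "m < n" and Fs: "sqint mu F" and Fd: "depends_on (space mu) (Past m) F"
    and Gm: "G \<in> borel_measurable mu" and Gb: "\<And>\<omega>. \<omega> \<in> space mu \<Longrightarrow> norm (G \<omega>) \<le> B"
    and Gd: "depends_on (space mu) (Past m) G"
  shows "(\<integral>\<omega>. F \<omega> \<bullet> (G \<omega> *v incr_f l \<omega> i m) \<partial>mu) = 0"
proof -
  have eq: "F \<omega> \<bullet> (G \<omega> *v incr_f l \<omega> i m) =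
      (\<Sum>r\<in>UNIV. \<Sum>c\<in>UNIV. (F \<omega> $ r * G \<omega> $ r $ c) * (sqrt h * \<omega> (i, m, c)))" for \<omega>
    by (simp add: inner_vec_def matrix_vector_mult_def incr_f_def sum_distrib_left mult.assoc mult.left_commute)
  have Fm: "F \<in> borel_measurable mu" using Fs by (simp add: sqint_def)
  have int1: "integrable mu (\<lambda>\<omega>. F \<omega> $ r * G \<omega> $ r $ c)" for r c
  proof (rule Bochner_Integration.integrable_bound)
    show "integrable mu (\<lambda>\<omega>. B * norm (F \<omega>))" using P.sqint_integrable_norm[OF Fs] by simp
    show "(\<lambda>\<omega>. F \<omega> $ r * G \<omega> $ r $ c) \<in> borel_measurable mu"
      by (intro borel_measurable_times nth_meas Fm Gm)
    show "AE \<omega> in mu. norm (F \<omega> $ r * G \<omega> $ r $ c) \<le> norm (B * norm (F \<omega>))"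
    proof (rule AE_I2)
      fix \<omega> assume w: "\<omega> \<in> space mu"
      have "\<bar>F \<omega> $ r\<bar> \<le> norm (F \<omega>)" using component_le_norm_cart[of "F \<omega>" r] by simp
      moreover have "\<bar>G \<omega> $ r $ c\<bar> \<le> B" using comp_le_norm_mat Gb[OF w] by (rule order_trans)
      ultimately have "\<bar>F \<omega> $ r\<bar> * \<bar>G \<omega> $ r $ c\<bar> \<le> norm (F \<omega>) * B"
        by (intro mult_mono) auto
      moreover have "0 \<le> B" using Gb[OF w] norm_ge_zero order_trans by blast
      ultimately show "norm (F \<omega> $ r * G \<omega> $ r $ c) \<le> norm (B * norm (F \<omega>))"
        by (simp add: abs_mult mult.commute)
    qed
  qed
  have im: "(\<integral>\<omega>. (F \<omega> $ r * G \<omega> $ r $ c) * (sqrt h * \<omega> (i, m, c)) \<partial>mu) =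
          (\<integral>\<omega>. F \<omega> $ r * G \<omega> $ r $ c \<partial>mu) * (\<integral>\<omega>. sqrt h * \<omega> (i, m, c) \<partial>mu)"
     "integrable mu (\<lambda>\<omega>. (F \<omega> $ r * G \<omega> $ r $ c) * (sqrt h * \<omega> (i, m, c)))" for r c
  proof -
    have fm: "(\<lambda>\<omega>. F \<omega> $ r * G \<omega> $ r $ c) \<in> borel_measurable mu"
      by (intro borel_measurable_times nth_meas Fm Gm)
    have gm: "(\<lambda>\<omega>. sqrt h * \<omega> (i, m, c)) \<in> borel_measurable mu"
      by (intro borel_measurable_times borel_measurable_const coord_meas)
    have fd: "depends_on (space mu) (Past m) (\<lambda>\<omega>. F \<omega> $ r * G \<omega> $ r $ c)"
      by (rule dep_comp2[OF Fd Gd])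
    have "depends_on (space mu) (Cur i m) (\<lambda>\<omega>. incr_f l \<omega> i m $ c)"
      by (rule dep_comp1[OF incr_f_dep])
    then have gd: "depends_on (space mu) (Cur i m) (\<lambda>\<omega>. sqrt h * \<omega> (i, m, c))"
      by (simp add: incr_f_def)
    note R = indep_mult[OF Iset_ne Past_sub Cur_sub Past_Cur fm gm fd gd int1 integral_sqrt_coord(3)[OF i m]]
    show "(\<integral>\<omega>. (F \<omega> $ r * G \<omega> $ r $ c) * (sqrt h * \<omega> (i, m, c)) \<partial>mu) =
          (\<integral>\<omega>. F \<omega> $ r * G \<omega> $ r $ c \<partial>mu) * (\<integral>\<omega>. sqrt h * \<omega> (i, m, c) \<partial>mu)"
      by (rule R(1))
    show "integrable mu (\<lambda>\<omega>. (F \<omega> $ r * G \<omega> $ r $ c) * (sqrt h * \<omega> (i, m, c)))"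
      by (rule R(2))
  qed
  have "(\<integral>\<omega>. F \<omega> \<bullet> (G \<omega> *v incr_f l \<omega> i m) \<partial>mu) =
      (\<integral>\<omega>. (\<Sum>r\<in>UNIV. \<Sum>c\<in>UNIV. (F \<omega> $ r * G \<omega> $ r $ c) * (sqrt h * \<omega> (i, m, c))) \<partial>mu)"
    by (simp only: eq)
  also have "\<dots> = (\<Sum>r\<in>UNIV. \<Sum>c\<in>UNIV. (\<integral>\<omega>. (F \<omega> $ r * G \<omega> $ r $ c) * (sqrt h * \<omega> (i, m, c)) \<partial>mu))"
    by (simp add: Bochner_Integration.integral_sum im(2))
  also have "\<dots> = 0"
    by (simp add: im(1) integral_sqrt_coord(2)[OF i m])
  finally show ?thesis .
qed

lemma var_bound:
  fixes G :: "_ \<Rightarrow> real^'d^'d"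
  assumes i: "i \<le> N" and m: "m < n"
    and Gm: "G \<in> borel_measurable mu" and Gb: "\<And>\<omega>. \<omega> \<in> space mu \<Longrightarrow> norm (G \<omega>) \<le> B"
    and Gd: "depends_on (space mu) (Past m) G"
  shows "sqint mu (\<lambda>\<omega>. G \<omega> *v incr_f l \<omega> i m)"
    and "(\<integral>\<omega>. (norm (G \<omega> *v incr_f l \<omega> i m))\<^sup>2 \<partial>mu) \<le> h * CARD('d) * (\<integral>\<omega>. (norm (G \<omega>))\<^sup>2 \<partial>mu)"
proof -
  have fm: "(\<lambda>\<omega>. (norm (G \<omega>))\<^sup>2) \<in> borel_measurable mu" using Gm by measurable
  have gm: "(\<lambda>\<omega>. (norm (incr_f l \<omega> i m))\<^sup>2) \<in> borel_measurable mu" using incr_f_meas by measurable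
  have fd: "depends_on (space mu) (Past m) (\<lambda>\<omega>. (norm (G \<omega>))\<^sup>2)" by (rule dep_comp1[OF Gd])
  have gd: "depends_on (space mu) (Cur i m) (\<lambda>\<omega>. (norm (incr_f l \<omega> i m))\<^sup>2)" by (rule dep_comp1[OF incr_f_dep])
  have Gs: "sqint mu G" using Gm Gb by (rule P.sqint_bounded)
  note R = indep_mult[OF Iset_ne Past_sub Cur_sub Past_Cur fm gm fd gd sqint_norm2[OF Gs] sqint_norm2[OF incr_f_sqint(1)[OF i m]]]
  have mvm: "(\<lambda>\<omega>. G \<omega> *v incr_f l \<omega> i m) \<in> borel_measurable mu"
    by (intro mv_meas Gm incr_f_meas)
  have pw: "(norm (G \<omega> *v incr_f l \<omega> i m))\<^sup>2 \<le> (norm (G \<omega>))\<^sup>2 * (norm (incr_f l \<omega> i m))\<^sup>2" for \<omega>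
  proof -
    have "(norm (G \<omega> *v incr_f l \<omega> i m))\<^sup>2 \<le> (norm (G \<omega>) * norm (incr_f l \<omega> i m))\<^sup>2"
      by (intro power_mono norm_mv_le norm_ge_zero)
    then show ?thesis by (simp add: power_mult_distrib)
  qed
  show si: "sqint mu (\<lambda>\<omega>. G \<omega> *v incr_f l \<omega> i m)"
    unfolding sqint_def
  proof
    show "(\<lambda>\<omega>. G \<omega> *v incr_f l \<omega> i m) \<in> borel_measurable mu" by (rule mvm)
    show "integrable mu (\<lambda>\<omega>. (norm (G \<omega> *v incr_f l \<omega> i m))\<^sup>2)"
    proof (rule Bochner_Integration.integrable_bound[OF R(2)])
      show "(\<lambda>\<omega>. (norm (G \<omega> *v incr_f l \<omega> i m))\<^sup>2) \<in> borel_measurable mu" using mvm by measurable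
      show "AE \<omega> in mu. norm ((norm (G \<omega> *v incr_f l \<omega> i m))\<^sup>2) \<le> norm ((norm (G \<omega>))\<^sup>2 * (norm (incr_f l \<omega> i m))\<^sup>2)"
        using pw by simp
    qed
  qed
  have "(\<integral>\<omega>. (norm (G \<omega> *v incr_f l \<omega> i m))\<^sup>2 \<partial>mu) \<le> (\<integral>\<omega>. (norm (G \<omega>))\<^sup>2 * (norm (incr_f l \<omega> i m))\<^sup>2 \<partial>mu)"
    by (rule integral_mono[OF sqint_norm2[OF si] R(2) pw])
  also have "\<dots> = (\<integral>\<omega>. (norm (G \<omega>))\<^sup>2 \<partial>mu) * (h * CARD('d))"
    using R(1) incr_f_sqint(2)[OF i m] by simp
  finally show "(\<integral>\<omega>. (norm (G \<omega> *v incr_f l \<omega> i m))\<^sup>2 \<partial>mu) \<le> h * CARD('d) * (\<integral>\<omega>. (norm (G \<omega>))\<^sup>2 \<partial>mu)"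
    by (simp add: mult.commute)
qed

end


lemma young_sq:
  fixes x y t :: real
  assumes t: "0 < t"
  shows "(x + y)\<^sup>2 \<le> (1 + t) * x\<^sup>2 + (1 + 1/t) * y\<^sup>2"
proof -
  have "0 \<le> (t * x - y)\<^sup>2 / t" using t by simp
  also have "(t * x - y)\<^sup>2 / t = t * x\<^sup>2 - 2 * x * y + y\<^sup>2 / t"
    using t by (simp add: power2_eq_square field_simps)
  finally have "2 * x * y \<le> t * x\<^sup>2 + y\<^sup>2 / t" by simp
  moreover have "(x + y)\<^sup>2 = x\<^sup>2 + 2 * x * y + y\<^sup>2" by (simp add: power2_eq_square algebra_simps)
  moreover have "(1 + t) * x\<^sup>2 + (1 + 1/t) * y\<^sup>2 = x\<^sup>2 + y\<^sup>2 + (t * x\<^sup>2 + y\<^sup>2 / t)"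
    by (simp add: algebra_simps)
  ultimately show ?thesis by linarith
qed

lemma norm_young:
  fixes p q :: "'a::real_normed_vector"
  assumes t: "0 < t"
  shows "(norm (p + q))\<^sup>2 \<le> (1 + t) * (norm p)\<^sup>2 + (1 + 1/t) * (norm q)\<^sup>2"
proof -
  have "(norm (p + q))\<^sup>2 \<le> (norm p + norm q)\<^sup>2" by (intro power_mono norm_triangle_ineq) simp
  also have "\<dots> \<le> (1 + t) * (norm p)\<^sup>2 + (1 + 1/t) * (norm q)\<^sup>2" by (rule young_sq[OF t])
  finally show ?thesis .
qed

lemma sum3_sq_le: "((x::real) + y + z)\<^sup>2 \<le> 3 * x\<^sup>2 + 3 * y\<^sup>2 + 3 * z\<^sup>2"
proof -
  have "0 \<le> (x - y)\<^sup>2" "0 \<le> (x - z)\<^sup>2" "0 \<le> (y - z)\<^sup>2" by simp_all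
  moreover have "(x + y + z)\<^sup>2 = x\<^sup>2 + y\<^sup>2 + z\<^sup>2 + 2*x*y + 2*x*z + 2*y*z"
    "(x - y)\<^sup>2 = x\<^sup>2 + y\<^sup>2 - 2*x*y" "(x - z)\<^sup>2 = x\<^sup>2 + z\<^sup>2 - 2*x*z" "(y - z)\<^sup>2 = y\<^sup>2 + z\<^sup>2 - 2*y*z"
    by (simp_all add: power2_eq_square algebra_simps)
  ultimately show ?thesis by linarith
qed

lemma norm_tri3: "norm ((x::'a::real_normed_vector) + y + z) \<le> norm x + norm y + norm z"
  using norm_triangle_ineq[of "x+y" z] norm_triangle_ineq[of x y] by linarith

lemma norm3_sq_le:
  fixes x y z :: "'a::real_normed_vector"
  shows "(norm (x + y + z))\<^sup>2 \<le> 3 * (norm x)\<^sup>2 + 3 * (norm y)\<^sup>2 + 3 * (norm z)\<^sup>2"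
proof -
  have "norm (x + y + z) \<le> norm x + norm y + norm z"
    using norm_triangle_ineq[of "x+y" z] norm_triangle_ineq[of x y] by linarith
  then have "(norm (x + y + z))\<^sup>2 \<le> (norm x + norm y + norm z)\<^sup>2" by (intro power_mono) auto
  also have "\<dots> \<le> 3 * (norm x)\<^sup>2 + 3 * (norm y)\<^sup>2 + 3 * (norm z)\<^sup>2" by (rule sum3_sq_le)
  finally show ?thesis .
qed

lemma norm3_expand:
  fixes x y z :: "'a::real_inner"
  shows "(norm (x + y + z))\<^sup>2 = (norm x)\<^sup>2 + (norm y)\<^sup>2 + (norm z)\<^sup>2 + 2 * (x \<bullet> y) + 2 * (x \<bullet> z) + 2 * (y \<bullet> z)"
  by (simp add: power2_norm_eq_inner inner_add_left inner_add_right inner_commute)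

lemma norm2_sum2_le:
  fixes x y :: "'a::real_normed_vector"
  shows "(norm (x + y))\<^sup>2 \<le> 2 * (norm x)\<^sup>2 + 2 * (norm y)\<^sup>2"
proof -
  have "(norm (x + y))\<^sup>2 \<le> (norm x + norm y)\<^sup>2" by (intro power_mono norm_triangle_ineq) simp
  also have "\<dots> \<le> 2 * (norm x)\<^sup>2 + 2 * (norm y)\<^sup>2" by (rule sq_sum_le)
  finally show ?thesis .
qed

lemma sqint_norm:
  fixes f :: "'a \<Rightarrow> 'b::euclidean_space"
  shows "sqint M f \<Longrightarrow> sqint M (\<lambda>\<omega>. norm (f \<omega>))"
  unfolding sqint_def by (auto intro!: borel_measurable_norm)

context scheme
begin

lemma Xf_Suc: "i \<le> N \<Longrightarrow> Xf \<omega> (Suc k) i = stepf a xi sg N h (\<lambda>j. Xf \<omega> k j) (Xf \<omega> k i) (incr_f l \<omega> i k)"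
  unfolding Xf_def by (subst Yp_Suc) (simp_all add: eta_contract_eq)

lemma Xc_Suc: "i \<le> N \<Longrightarrow> Xc \<omega> (Suc k) i = stepf a xi sg N (2*h) (\<lambda>j. Xc \<omega> k j) (Xc \<omega> k i) (incr_c l \<omega> i k)"
  unfolding Xc_def by (subst Yp_Suc) (simp_all add: eta_contract_eq)

lemma Xf_0: "Xf \<omega> 0 i = x0" and Xc_0: "Xc \<omega> 0 i = x0"
  unfolding Xf_def Xc_def by (simp_all add: Yp_0)

lemma step_sqint:
  assumes i: "i \<le> N" and hh: "0 \<le> hh" and us: "sqint mu u" and bs: "sqint mu \<beta>"
    and sm: "(\<lambda>\<omega>. stepf a xi sg N hh (U \<omega>) (u \<omega>) (\<beta> \<omega>)) \<in> borel_measurable mu"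
  shows "sqint mu (\<lambda>\<omega>. stepf a xi sg N hh (U \<omega>) (u \<omega>) (\<beta> \<omega>))"
proof (rule sqint_dom[OF sm, of "\<lambda>\<omega>. norm (u \<omega>) + hh * K + K * norm (\<beta> \<omega>)" 1])
  show "sqint mu (\<lambda>\<omega>. norm (u \<omega>) + hh * K + K * norm (\<beta> \<omega>))"
  proof -
    have "sqint mu (\<lambda>\<omega>. K * norm (\<beta> \<omega>))" using sqint_scaleR[OF sqint_norm[OF bs], of K] by simp
    then show ?thesis by (intro sqint_add sqint_norm us P.sqint_const)
  qed
  fix \<omega>
  have "norm (stepf a xi sg N hh (U \<omega>) (u \<omega>) (\<beta> \<omega>)) \<le> norm (u \<omega>) + norm (hh *\<^sub>R a (u \<omega>, mf xi N (U \<omega>) (u \<omega>))) + norm (sg (u \<omega>) *v \<beta> \<omega>)"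
    unfolding stepf_def by (rule norm_tri3)
  also have "norm (hh *\<^sub>R a (u \<omega>, mf xi N (U \<omega>) (u \<omega>))) \<le> hh * K"
    using hh a_bd by (simp add: mult_left_mono)
  also have "norm (sg (u \<omega>) *v \<beta> \<omega>) \<le> K * norm (\<beta> \<omega>)"
    using norm_mv_le sg_bd by (meson mult_right_mono norm_ge_zero order_trans)
  finally show "norm (stepf a xi sg N hh (U \<omega>) (u \<omega>) (\<beta> \<omega>)) \<le> 1 * norm (norm (u \<omega>) + hh * K + K * norm (\<beta> \<omega>))"
    by simp
qed

end


lemma norm_pair_sq: "(norm ((a::'a::real_normed_vector), (b::'b::real_normed_vector)))\<^sup>2 = (norm a)\<^sup>2 + (norm b)\<^sup>2"
  by (simp add: norm_Pair)

context scheme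
begin

lemma mf_lip:
  "(mf xi N U x - mf xi N W y)\<^sup>2 \<le> K\<^sup>2 * (norm (x - y))\<^sup>2 + K\<^sup>2 * ((\<Sum>j<N. (norm (U j - W j))\<^sup>2) / N)"
proof -
  define d where "d j = xi (x, U j) - xi (y, W j)" for j
  have Npos: "0 < real N" using N1 by simp
  have "mf xi N U x - mf xi N W y = (\<Sum>j<N. d j) / N"
    unfolding mf_def d_def by (simp add: sum_subtractf diff_divide_distrib)
  then have "(mf xi N U x - mf xi N W y)\<^sup>2 = (\<Sum>j<N. d j)\<^sup>2 / (real N)\<^sup>2"
    by (simp add: power_divide)
  also have "\<dots> \<le> ((\<Sum>j<N. (d j)\<^sup>2) * real N) / (real N)\<^sup>2"
    using sum_squared_le_sum_of_squares[of d "{..<N}"] by (intro divide_right_mono) simp_all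
  also have "\<dots> = (\<Sum>j<N. (d j)\<^sup>2) / real N"
    using Npos by (simp add: power2_eq_square)
  also have "\<dots> \<le> (\<Sum>j<N. K\<^sup>2 * (norm (x - y))\<^sup>2 + K\<^sup>2 * (norm (U j - W j))\<^sup>2) / real N"
  proof (intro divide_right_mono sum_mono)
    fix j
    have "\<bar>d j\<bar> \<le> K * norm ((x, U j) - (y, W j))" unfolding d_def by (rule xi_lip)
    then have "(d j)\<^sup>2 \<le> (K * norm ((x, U j) - (y, W j)))\<^sup>2"
      by (metis abs_ge_zero power2_abs power_mono)
    also have "\<dots> = K\<^sup>2 * ((norm (x - y))\<^sup>2 + (norm (U j - W j))\<^sup>2)"
      by (simp add: power_mult_distrib norm_pair_sq)
    finally show "(d j)\<^sup>2 \<le> K\<^sup>2 * (norm (x - y))\<^sup>2 + K\<^sup>2 * (norm (U j - W j))\<^sup>2"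
      by (simp add: algebra_simps)
  qed simp
  also have "\<dots> = K\<^sup>2 * (norm (x - y))\<^sup>2 + K\<^sup>2 * ((\<Sum>j<N. (norm (U j - W j))\<^sup>2) / N)"
    using Npos by (simp add: sum.distrib sum_distrib_left[symmetric] field_simps)
  finally show ?thesis .
qed

lemma a_diff_sq:
  "(norm (a (x, mf xi N U x) - a (y, mf xi N W y)))\<^sup>2 \<le>
     K\<^sup>2 * (1 + K\<^sup>2) * (norm (x - y))\<^sup>2 + K\<^sup>2 * K\<^sup>2 * ((\<Sum>j<N. (norm (U j - W j))\<^sup>2) / N)"
proof -
  have "norm (a (x, mf xi N U x) - a (y, mf xi N W y)) \<le> K * norm ((x, mf xi N U x) - (y, mf xi N W y))"
    by (rule a_lip)
  then have "(norm (a (x, mf xi N U x) - a (y, mf xi N W y)))\<^sup>2 \<le> (K * norm ((x, mf xi N U x) - (y, mf xi N W y)))\<^sup>2"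
    by (intro power_mono) auto
  also have "\<dots> = K\<^sup>2 * ((norm (x - y))\<^sup>2 + (mf xi N U x - mf xi N W y)\<^sup>2)"
    by (simp add: power_mult_distrib norm_pair_sq)
  also have "\<dots> \<le> K\<^sup>2 * ((norm (x - y))\<^sup>2 + (K\<^sup>2 * (norm (x - y))\<^sup>2 + K\<^sup>2 * ((\<Sum>j<N. (norm (U j - W j))\<^sup>2) / N)))"
    by (intro mult_left_mono add_left_mono mf_lip) simp
  also have "\<dots> = K\<^sup>2 * (1 + K\<^sup>2) * (norm (x - y))\<^sup>2 + K\<^sup>2 * K\<^sup>2 * ((\<Sum>j<N. (norm (U j - W j))\<^sup>2) / N)"
    by (simp add: algebra_simps)
  finally show ?thesis .
qed

lemma Xf_sqint: "k \<le> n \<Longrightarrow> i \<le> N \<Longrightarrow> sqint mu (\<lambda>\<omega>. Xf \<omega> k i)"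
proof (induction k arbitrary: i)
  case 0
  then show ?case by (simp add: Xf_0 P.sqint_const)
next
  case (Suc k)
  have eq: "(\<lambda>\<omega>. Xf \<omega> (Suc k) i) = (\<lambda>\<omega>. stepf a xi sg N h (\<lambda>j. Xf \<omega> k j) (Xf \<omega> k i) (incr_f l \<omega> i k))"
    using Xf_Suc[OF Suc.prems(2)] by simp
  show ?case unfolding eq
  proof (rule step_sqint[OF Suc.prems(2)])
    show "0 \<le> h" using h_pos by simp
    show "sqint mu (\<lambda>\<omega>. Xf \<omega> k i)" using Suc by simp
    show "sqint mu (\<lambda>\<omega>. incr_f l \<omega> i k)" using Suc.prems by (intro incr_f_sqint) auto
    show "(\<lambda>\<omega>. stepf a xi sg N h (\<lambda>j. Xf \<omega> k j) (Xf \<omega> k i) (incr_f l \<omega> i k)) \<in> borel_measurable mu"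
      using Xf_meas[OF Suc.prems(2), of "Suc k"] unfolding eq .
  qed
qed

lemma Xc_sqint: "2*k \<le> n \<Longrightarrow> i \<le> N \<Longrightarrow> sqint mu (\<lambda>\<omega>. Xc \<omega> k i)"
proof (induction k arbitrary: i)
  case 0
  then show ?case by (simp add: Xc_0 P.sqint_const)
next
  case (Suc k)
  have eq: "(\<lambda>\<omega>. Xc \<omega> (Suc k) i) = (\<lambda>\<omega>. stepf a xi sg N (2*h) (\<lambda>j. Xc \<omega> k j) (Xc \<omega> k i) (incr_c l \<omega> i k))"
    using Xc_Suc[OF Suc.prems(2)] by simp
  show ?case unfolding eq
  proof (rule step_sqint[OF Suc.prems(2)])
    show "0 \<le> 2*h" using h_pos by simp
    show "sqint mu (\<lambda>\<omega>. Xc \<omega> k i)" using Suc by simp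
    show "sqint mu (\<lambda>\<omega>. incr_c l \<omega> i k)" unfolding incr_c_def
      using Suc.prems by (intro sqint_add incr_f_sqint) auto
    show "(\<lambda>\<omega>. stepf a xi sg N (2*h) (\<lambda>j. Xc \<omega> k j) (Xc \<omega> k i) (incr_c l \<omega> i k)) \<in> borel_measurable mu"
      using Xc_meas[OF Suc.prems(2), of "Suc k"] unfolding eq .
  qed
qed

end


lemma final_arith:
  fixes h b K dd c0 s EP EQ ED :: real
  assumes h0: "0 < h" and h1: "h \<le> 1" and b0: "0 \<le> b" and K0: "0 \<le> K" and d0: "0 \<le> dd" and c00: "0 \<le> c0"
    and s: "s \<le> 3 * b + c0 * h"
    and EP: "EP \<le> b + h * dd * K\<^sup>2 * (b + s)"
    and EQ: "EQ \<le> 2 * h\<^sup>2 * (K\<^sup>2 * (1 + 2 * K\<^sup>2)) * (b + s)"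
    and ED: "ED \<le> (1 + h) * EP + (1 + 1/h) * EQ"
    and bs: "0 \<le> b + s"
  shows "ED \<le> (1 + (1 + 8 * (dd * K\<^sup>2 + 2 * (K\<^sup>2 * (1 + 2 * K\<^sup>2))) + 2 * (dd * K\<^sup>2 + 2 * (K\<^sup>2 * (1 + 2 * K\<^sup>2))) * c0) * h) * b
              + (1 + 8 * (dd * K\<^sup>2 + 2 * (K\<^sup>2 * (1 + 2 * K\<^sup>2))) + 2 * (dd * K\<^sup>2 + 2 * (K\<^sup>2 * (1 + 2 * K\<^sup>2))) * c0) * h\<^sup>2"
proof -
  define Z where "Z = dd * K\<^sup>2 + 2 * (K\<^sup>2 * (1 + 2 * K\<^sup>2))"
  define X where "X = b + s"
  have Z0: "0 \<le> Z" unfolding Z_def using d0 by simp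
  have X0: "0 \<le> X" using bs X_def by simp
  have Xle: "X \<le> 4 * b + c0 * h" using s X_def by simp
  have A0: "0 \<le> K\<^sup>2 * (1 + 2 * K\<^sup>2)" by simp
  have ddK0: "0 \<le> dd * K\<^sup>2" using d0 by simp
  have p1: "(1 + h) * EP \<le> (1 + h) * b + (1 + h) * (h * dd * K\<^sup>2 * X)"
    using EP h0 unfolding X_def by (simp add: distrib_left[symmetric] mult_left_mono)
  have p2: "(1 + h) * (h * dd * K\<^sup>2 * X) \<le> 2 * h * (dd * K\<^sup>2) * X"
  proof -
    have "(1 + h) * (h * dd * K\<^sup>2 * X) = (1 + h) * (h * (dd * K\<^sup>2 * X))" by (simp add: mult.assoc)
    also have "\<dots> \<le> 2 * (h * (dd * K\<^sup>2 * X))"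
      using h0 h1 ddK0 X0 by (intro mult_right_mono) auto
    finally show ?thesis by (simp add: mult.assoc mult.left_commute)
  qed
  have q1: "(1 + 1/h) * EQ \<le> (1 + 1/h) * (2 * h\<^sup>2 * (K\<^sup>2 * (1 + 2 * K\<^sup>2)) * X)"
    using EQ h0 unfolding X_def by (intro mult_left_mono) auto
  have q2: "(1 + 1/h) * (2 * h\<^sup>2 * (K\<^sup>2 * (1 + 2 * K\<^sup>2)) * X) = 2 * h * (1 + h) * ((K\<^sup>2 * (1 + 2 * K\<^sup>2)) * X)"
    using h0 by (simp add: field_simps power2_eq_square)
  have q3: "2 * h * (1 + h) * ((K\<^sup>2 * (1 + 2 * K\<^sup>2)) * X) \<le> 2 * h * 2 * ((K\<^sup>2 * (1 + 2 * K\<^sup>2)) * X)"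
    using h0 h1 A0 X0 by (intro mult_right_mono mult_left_mono) auto
  have "ED \<le> (1 + h) * b + 2 * h * Z * X"
    using ED p1 p2 q1 q2 q3 unfolding Z_def by (simp add: algebra_simps)
  also have "\<dots> \<le> (1 + h) * b + 2 * h * Z * (4 * b + c0 * h)"
    using h0 Z0 Xle by (intro add_left_mono mult_left_mono) auto
  also have "\<dots> = b + h * b * (1 + 8 * Z) + (2 * Z * c0) * h\<^sup>2"
    by (simp add: algebra_simps power2_eq_square)
  also have "\<dots> \<le> (1 + (1 + 8 * Z + 2 * Z * c0) * h) * b + (1 + 8 * Z + 2 * Z * c0) * h\<^sup>2"
  proof -
    have "h * b * (1 + 8 * Z) \<le> h * b * (1 + 8 * Z + 2 * Z * c0)"
      using h0 b0 Z0 c00 by (intro mult_left_mono) auto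
    moreover have "(2 * Z * c0) * h\<^sup>2 \<le> (1 + 8 * Z + 2 * Z * c0) * h\<^sup>2"
      using Z0 by (intro mult_right_mono) auto
    ultimately show ?thesis by (simp add: algebra_simps)
  qed
  finally show ?thesis unfolding Z_def .
qed

context scheme
begin

lemma mf_meas:
  assumes "\<And>j. j < N \<Longrightarrow> (\<lambda>\<omega>. U \<omega> j) \<in> borel_measurable mu" "x \<in> borel_measurable mu"
  shows "(\<lambda>\<omega>. mf xi N (U \<omega>) (x \<omega>)) \<in> borel_measurable mu"
  unfolding mf_def
  by (intro borel_measurable_divide borel_measurable_sum cont_meas2[OF cx] assms borel_measurable_const) auto

lemma adiff_sqint:
  assumes "\<And>j. j < N \<Longrightarrow> (\<lambda>\<omega>. U \<omega> j) \<in> borel_measurable mu" "x \<in> borel_measurable mu"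
    "\<And>j. j < N \<Longrightarrow> (\<lambda>\<omega>. W \<omega> j) \<in> borel_measurable mu" "y \<in> borel_measurable mu"
  shows "sqint mu (\<lambda>\<omega>. a (x \<omega>, mf xi N (U \<omega>) (x \<omega>)) - a (y \<omega>, mf xi N (W \<omega>) (y \<omega>)))"
proof (rule P.sqint_bounded)
  show "(\<lambda>\<omega>. a (x \<omega>, mf xi N (U \<omega>) (x \<omega>)) - a (y \<omega>, mf xi N (W \<omega>) (y \<omega>))) \<in> borel_measurable mu"
    by (intro borel_measurable_diff cont_meas2[OF ca] mf_meas assms) auto
  fix \<omega>
  show "norm (a (x \<omega>, mf xi N (U \<omega>) (x \<omega>)) - a (y \<omega>, mf xi N (W \<omega>) (y \<omega>))) \<le> 2 * K"
    using norm_triangle_ineq4[of "a (x \<omega>, mf xi N (U \<omega>) (x \<omega>))" "a (y \<omega>, mf xi N (W \<omega>) (y \<omega>))"] a_bd[of "(x \<omega>, mf xi N (U \<omega>) (x \<omega>))"] a_bd[of "(y \<omega>, mf xi N (W \<omega>) (y \<omega>))"]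
    by linarith
qed

lemma T_bound:
  assumes i: "i \<le> N" and m: "m < n" and xs: "sqint mu x" and ys: "sqint mu y"
    and xd: "depends_on (space mu) (Past m) x" and yd: "depends_on (space mu) (Past m) y"
  shows "sqint mu (\<lambda>\<omega>. (sg (x \<omega>) - sg (y \<omega>)) *v incr_f l \<omega> i m)"
    and "(\<integral>\<omega>. (norm ((sg (x \<omega>) - sg (y \<omega>)) *v incr_f l \<omega> i m))\<^sup>2 \<partial>mu)
           \<le> h * real CARD('d) * K\<^sup>2 * (\<integral>\<omega>. (norm (x \<omega> - y \<omega>))\<^sup>2 \<partial>mu)"
proof -
  have Gm: "(\<lambda>\<omega>. sg (x \<omega>) - sg (y \<omega>)) \<in> borel_measurable mu"
    using xs ys by (intro borel_measurable_diff borel_measurable_continuous_on[OF cs]) (auto simp: sqint_def)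
  have Gb: "norm (sg (x \<omega>) - sg (y \<omega>)) \<le> 2 * K" for \<omega>
    using norm_triangle_ineq4[of "sg (x \<omega>)" "sg (y \<omega>)"] sg_bd[of "x \<omega>"] sg_bd[of "y \<omega>"] by linarith
  have Gd: "depends_on (space mu) (Past m) (\<lambda>\<omega>. sg (x \<omega>) - sg (y \<omega>))"
    by (rule dep_comp2[OF xd yd])
  note V = var_bound[OF i m Gm Gb Gd]
  show "sqint mu (\<lambda>\<omega>. (sg (x \<omega>) - sg (y \<omega>)) *v incr_f l \<omega> i m)" by (rule V(1))
  have Gs: "sqint mu (\<lambda>\<omega>. sg (x \<omega>) - sg (y \<omega>))" using Gm Gb by (rule P.sqint_bounded)
  have xy: "sqint mu (\<lambda>\<omega>. x \<omega> - y \<omega>)" by (rule sqint_diff[OF xs ys])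
  have "(\<integral>\<omega>. (norm (sg (x \<omega>) - sg (y \<omega>)))\<^sup>2 \<partial>mu) \<le> (\<integral>\<omega>. K\<^sup>2 * (norm (x \<omega> - y \<omega>))\<^sup>2 \<partial>mu)"
  proof (rule integral_mono)
    show "integrable mu (\<lambda>\<omega>. (norm (sg (x \<omega>) - sg (y \<omega>)))\<^sup>2)" by (rule sqint_norm2[OF Gs])
    show "integrable mu (\<lambda>\<omega>. K\<^sup>2 * (norm (x \<omega> - y \<omega>))\<^sup>2)" using sqint_norm2[OF xy] by simp
    fix \<omega>
    have "norm (sg (x \<omega>) - sg (y \<omega>)) \<le> K * norm (x \<omega> - y \<omega>)" by (rule sg_lip)
    then have "(norm (sg (x \<omega>) - sg (y \<omega>)))\<^sup>2 \<le> (K * norm (x \<omega> - y \<omega>))\<^sup>2" by (intro power_mono) auto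
    then show "(norm (sg (x \<omega>) - sg (y \<omega>)))\<^sup>2 \<le> K\<^sup>2 * (norm (x \<omega> - y \<omega>))\<^sup>2" by (simp add: power_mult_distrib)
  qed
  also have "\<dots> = K\<^sup>2 * (\<integral>\<omega>. (norm (x \<omega> - y \<omega>))\<^sup>2 \<partial>mu)" by simp
  finally have "h * real CARD('d) * (\<integral>\<omega>. (norm (sg (x \<omega>) - sg (y \<omega>)))\<^sup>2 \<partial>mu)
      \<le> h * real CARD('d) * (K\<^sup>2 * (\<integral>\<omega>. (norm (x \<omega> - y \<omega>))\<^sup>2 \<partial>mu))"
    using h_pos by (intro mult_left_mono) auto
  with V(2) show "(\<integral>\<omega>. (norm ((sg (x \<omega>) - sg (y \<omega>)) *v incr_f l \<omega> i m))\<^sup>2 \<partial>mu)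
           \<le> h * real CARD('d) * K\<^sup>2 * (\<integral>\<omega>. (norm (x \<omega> - y \<omega>))\<^sup>2 \<partial>mu)"
    by (simp add: mult.assoc)
qed

definition c0 :: real where "c0 = 3 * K\<^sup>2 * (1 + real CARD('d))"

lemma vw_bound:
  assumes k: "2*k < n" and j: "j \<le> N" and b: "(\<integral>\<omega>. (norm (Xf \<omega> (2*k) j - Xc \<omega> k j))\<^sup>2 \<partial>mu) \<le> b"
  shows "sqint mu (\<lambda>\<omega>. Xf \<omega> (Suc (2*k)) j - Xc \<omega> k j)"
    and "(\<integral>\<omega>. (norm (Xf \<omega> (Suc (2*k)) j - Xc \<omega> k j))\<^sup>2 \<partial>mu) \<le> 3 * b + c0 * h"
proof -
  show s: "sqint mu (\<lambda>\<omega>. Xf \<omega> (Suc (2*k)) j - Xc \<omega> k j)"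
    using k j by (intro sqint_diff Xf_sqint Xc_sqint) auto
  have se: "sqint mu (\<lambda>\<omega>. Xf \<omega> (2*k) j - Xc \<omega> k j)"
    using k j by (intro sqint_diff Xf_sqint Xc_sqint) auto
  note bs = incr_f_sqint[OF j k]
  have pw: "(norm (Xf \<omega> (Suc (2*k)) j - Xc \<omega> k j))\<^sup>2 \<le>
      3 * (norm (Xf \<omega> (2*k) j - Xc \<omega> k j))\<^sup>2 + 3 * (h * K)\<^sup>2 + 3 * K\<^sup>2 * (norm (incr_f l \<omega> j (2*k)))\<^sup>2" for \<omega>
  proof -
    let ?e = "Xf \<omega> (2*k) j - Xc \<omega> k j"
    let ?A = "h *\<^sub>R a (Xf \<omega> (2*k) j, mf xi N (\<lambda>j. Xf \<omega> (2*k) j) (Xf \<omega> (2*k) j))"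
    let ?B = "sg (Xf \<omega> (2*k) j) *v incr_f l \<omega> j (2*k)"
    have eq: "Xf \<omega> (Suc (2*k)) j - Xc \<omega> k j = ?e + ?A + ?B"
      using Xf_Suc[OF j, of \<omega> "2*k"] by (simp add: stepf_def algebra_simps)
    have nA: "norm ?A \<le> h * K" using h_pos a_bd by (simp add: mult_left_mono)
    have nB: "norm ?B \<le> K * norm (incr_f l \<omega> j (2*k))"
      using norm_mv_le sg_bd by (meson mult_right_mono norm_ge_zero order_trans)
    have "(norm (?e + ?A + ?B))\<^sup>2 \<le> 3 * (norm ?e)\<^sup>2 + 3 * (norm ?A)\<^sup>2 + 3 * (norm ?B)\<^sup>2" by (rule norm3_sq_le)
    also have "\<dots> \<le> 3 * (norm ?e)\<^sup>2 + 3 * (h * K)\<^sup>2 + 3 * (K * norm (incr_f l \<omega> j (2*k)))\<^sup>2"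
      using nA nB by (intro add_mono mult_left_mono power_mono) auto
    finally show ?thesis unfolding eq by (simp add: power_mult_distrib)
  qed
  have "(\<integral>\<omega>. (norm (Xf \<omega> (Suc (2*k)) j - Xc \<omega> k j))\<^sup>2 \<partial>mu) \<le>
     (\<integral>\<omega>. 3 * (norm (Xf \<omega> (2*k) j - Xc \<omega> k j))\<^sup>2 + 3 * (h * K)\<^sup>2 + 3 * K\<^sup>2 * (norm (incr_f l \<omega> j (2*k)))\<^sup>2 \<partial>mu)"
    by (intro integral_mono pw sqint_norm2[OF s] Bochner_Integration.integrable_add integrable_mult_right sqint_norm2[OF se]
          sqint_norm2[OF bs(1)] P.integrable_const)
  also have "\<dots> = 3 * (\<integral>\<omega>. (norm (Xf \<omega> (2*k) j - Xc \<omega> k j))\<^sup>2 \<partial>mu) + 3 * (h * K)\<^sup>2 + 3 * K\<^sup>2 * (h * real CARD('d))"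
    using sqint_norm2[OF se] sqint_norm2[OF bs(1)] bs(2)
    by (simp add: Bochner_Integration.integral_add P.prob_space)
  also have "\<dots> \<le> 3 * b + c0 * h"
  proof -
    have "3 * (\<integral>\<omega>. (norm (Xf \<omega> (2*k) j - Xc \<omega> k j))\<^sup>2 \<partial>mu) \<le> 3 * b" using b by simp
    moreover have "3 * (h * K)\<^sup>2 \<le> 3 * K\<^sup>2 * h"
    proof -
      have "h * h \<le> h * 1" using h_pos h_le1 by (intro mult_left_mono) auto
      then have "h\<^sup>2 * K\<^sup>2 \<le> h * K\<^sup>2" by (intro mult_right_mono) (auto simp: power2_eq_square)
      then show ?thesis by (simp add: power_mult_distrib algebra_simps)
    qed
    moreover have "3 * K\<^sup>2 * (h * real CARD('d)) = 3 * K\<^sup>2 * real CARD('d) * h" by simp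
    ultimately show ?thesis unfolding c0_def by (simp add: algebra_simps)
  qed
  finally show "(\<integral>\<omega>. (norm (Xf \<omega> (Suc (2*k)) j - Xc \<omega> k j))\<^sup>2 \<partial>mu) \<le> 3 * b + c0 * h" .
qed

end


lemma ident_gen:
  fixes u w p q r S1 S2 R1 R2 :: "'a::real_vector"
  shows "((u + h *\<^sub>R p + S1) + h *\<^sub>R q + S2) - (w + (2*h) *\<^sub>R r + (R1 + R2)) =
         ((u - w) + (S1 - R1) + (S2 - R2)) + (h *\<^sub>R (p - r) + h *\<^sub>R (q - r))"
proof -
  have h2: "2*h = h + h" by simp
  have e: "(2*h) *\<^sub>R r = h *\<^sub>R r + h *\<^sub>R r" unfolding h2 by (rule scaleR_add_left)
  have f: "h *\<^sub>R (p - r) = h *\<^sub>R p - h *\<^sub>R r" "h *\<^sub>R (q - r) = h *\<^sub>R q - h *\<^sub>R r"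
    by (simp_all add: scaleR_diff_right)
  show ?thesis unfolding e f by (simp only: diff_conv_add_uminus minus_add_distrib add_ac)
qed

context scheme
begin

definition Cst :: real where
  "Cst = 1 + 8 * (real CARD('d) * K\<^sup>2 + 2 * (K\<^sup>2 * (1 + 2 * K\<^sup>2))) + 2 * (real CARD('d) * K\<^sup>2 + 2 * (K\<^sup>2 * (1 + 2 * K\<^sup>2))) * c0"

lemma Cst_pos: "1 \<le> Cst"
  unfolding Cst_def c0_def by (simp add: K0)

lemma Cur_Past: "Cur i m \<subseteq> Past (Suc m)"
  by (auto simp: Cur_def Past_def)

lemma Past_mono: "m \<le> m' \<Longrightarrow> Past m \<subseteq> Past m'"
  by (auto simp: Past_def)

lemma err_step:
  assumes k: "2*k+2 \<le> n" and i: "i \<le> N" and b0: "0 \<le> b"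
    and IH: "\<And>j. j \<le> N \<Longrightarrow> (\<integral>\<omega>. (norm (Xf \<omega> (2*k) j - Xc \<omega> k j))\<^sup>2 \<partial>mu) \<le> b"
  shows "(\<integral>\<omega>. (norm (Xf \<omega> (Suc (Suc (2*k))) i - Xc \<omega> (Suc k) i))\<^sup>2 \<partial>mu) \<le> (1 + Cst * h) * b + Cst * h\<^sup>2"
proof -
  define u where "u \<omega> = Xf \<omega> (2*k) i" for \<omega> :: "nat \<times> nat \<times> 'd \<Rightarrow> real"
  define w where "w \<omega> = Xc \<omega> k i" for \<omega> :: "nat \<times> nat \<times> 'd \<Rightarrow> real"
  define v where "v \<omega> = Xf \<omega> (Suc (2*k)) i" for \<omega> :: "nat \<times> nat \<times> 'd \<Rightarrow> real"
  define U where "U \<omega> = (\<lambda>j. Xf \<omega> (2*k) j)" for \<omega> :: "nat \<times> nat \<times> 'd \<Rightarrow> real"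
  define W where "W \<omega> = (\<lambda>j. Xc \<omega> k j)" for \<omega> :: "nat \<times> nat \<times> 'd \<Rightarrow> real"
  define V where "V \<omega> = (\<lambda>j. Xf \<omega> (Suc (2*k)) j)" for \<omega> :: "nat \<times> nat \<times> 'd \<Rightarrow> real"
  define \<beta>1 where "\<beta>1 \<omega> = incr_f l \<omega> i (2*k)" for \<omega> :: "nat \<times> nat \<times> 'd \<Rightarrow> real"
  define \<beta>2 where "\<beta>2 \<omega> = incr_f l \<omega> i (Suc (2*k))" for \<omega> :: "nat \<times> nat \<times> 'd \<Rightarrow> real"
  define e where "e \<omega> = u \<omega> - w \<omega>" for \<omega> :: "nat \<times> nat \<times> 'd \<Rightarrow> real"
  define T1 where "T1 \<omega> = (sg (u \<omega>) - sg (w \<omega>)) *v \<beta>1 \<omega>" for \<omega> :: "nat \<times> nat \<times> 'd \<Rightarrow> real"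
  define T2 where "T2 \<omega> = (sg (v \<omega>) - sg (w \<omega>)) *v \<beta>2 \<omega>" for \<omega> :: "nat \<times> nat \<times> 'd \<Rightarrow> real"
  define A1 where "A1 \<omega> = a (u \<omega>, mf xi N (U \<omega>) (u \<omega>)) - a (w \<omega>, mf xi N (W \<omega>) (w \<omega>))" for \<omega> :: "nat \<times> nat \<times> 'd \<Rightarrow> real"
  define A2 where "A2 \<omega> = a (v \<omega>, mf xi N (V \<omega>) (v \<omega>)) - a (w \<omega>, mf xi N (W \<omega>) (w \<omega>))" for \<omega> :: "nat \<times> nat \<times> 'd \<Rightarrow> real"
  define Pv where "Pv \<omega> = e \<omega> + T1 \<omega> + T2 \<omega>" for \<omega> :: "nat \<times> nat \<times> 'd \<Rightarrow> real"
  define Qv where "Qv \<omega> = h *\<^sub>R A1 \<omega> + h *\<^sub>R A2 \<omega>" for \<omega> :: "nat \<times> nat \<times> 'd \<Rightarrow> real"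
  define D where "D \<omega> = Xf \<omega> (Suc (Suc (2*k))) i - Xc \<omega> (Suc k) i" for \<omega> :: "nat \<times> nat \<times> 'd \<Rightarrow> real"
  have k1: "2*k < n" "Suc (2*k) < n" "2*k \<le> n" "Suc (2*k) \<le> n" using k by auto
  have ident: "D \<omega> = Pv \<omega> + Qv \<omega>" for \<omega> :: "nat \<times> nat \<times> 'd \<Rightarrow> real"
  proof -
    have "Xf \<omega> (Suc (Suc (2*k))) i = stepf a xi sg N h (V \<omega>) (v \<omega>) (\<beta>2 \<omega>)"
      unfolding V_def v_def \<beta>2_def by (rule Xf_Suc[OF i])
    moreover have "v \<omega> = stepf a xi sg N h (U \<omega>) (u \<omega>) (\<beta>1 \<omega>)"
      unfolding U_def v_def u_def \<beta>1_def by (rule Xf_Suc[OF i])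
    moreover have "Xc \<omega> (Suc k) i = stepf a xi sg N (2*h) (W \<omega>) (w \<omega>) (\<beta>1 \<omega> + \<beta>2 \<omega>)"
      unfolding W_def w_def \<beta>1_def \<beta>2_def using Xc_Suc[OF i, of \<omega> k] by (simp add: incr_c_def)
    ultimately show ?thesis
      unfolding D_def Pv_def Qv_def e_def T1_def T2_def A1_def A2_def stepf_def
        matrix_vector_right_distrib matrix_vector_mult_diff_rdistrib
      by (simp only: ident_gen)
  qed
  have su: "sqint mu u" unfolding u_def using k1 i by (intro Xf_sqint) auto
  have sw: "sqint mu w" unfolding w_def using k1 i by (intro Xc_sqint) auto
  have sv: "sqint mu v" unfolding v_def using k1 i by (intro Xf_sqint) auto
  have se: "sqint mu e" unfolding e_def by (rule sqint_diff[OF su sw])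
  have ud: "depends_on (space mu) (Past (2*k)) u" unfolding u_def by (rule Xf_dep[OF i])
  have wd: "depends_on (space mu) (Past (2*k)) w" unfolding w_def by (rule Xc_dep[OF i])
  have vd: "depends_on (space mu) (Past (Suc (2*k))) v" unfolding v_def by (rule Xf_dep[OF i])
  have PP: "Past (2*k) \<subseteq> Past (Suc (2*k))" by (rule Past_mono) simp
  have ud': "depends_on (space mu) (Past (Suc (2*k))) u" by (rule dep_mono[OF ud PP])
  have wd': "depends_on (space mu) (Past (Suc (2*k))) w" by (rule dep_mono[OF wd PP])
  note TB1 = T_bound[OF i k1(1) su sw ud wd]
  note TB2 = T_bound[OF i k1(2) sv sw vd wd']
  have sT1: "sqint mu T1" unfolding T1_def \<beta>1_def by (rule TB1(1))
  have sT2: "sqint mu T2" unfolding T2_def \<beta>2_def by (rule TB2(1))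
  have ET1: "(\<integral>\<omega>. (norm (T1 \<omega>))\<^sup>2 \<partial>mu) \<le> h * real CARD('d) * K\<^sup>2 * (\<integral>\<omega>. (norm (e \<omega>))\<^sup>2 \<partial>mu)"
    unfolding T1_def \<beta>1_def e_def by (rule TB1(2))
  have ET2: "(\<integral>\<omega>. (norm (T2 \<omega>))\<^sup>2 \<partial>mu) \<le> h * real CARD('d) * K\<^sup>2 * (\<integral>\<omega>. (norm (v \<omega> - w \<omega>))\<^sup>2 \<partial>mu)"
    unfolding T2_def \<beta>2_def by (rule TB2(2))
  have Gb: "norm (sg x - sg y) \<le> 2 * K" for x y
    using norm_triangle_ineq4[of "sg x" "sg y"] sg_bd[of x] sg_bd[of y] by linarith
  have Gm1: "(\<lambda>\<omega>. sg (u \<omega>) - sg (w \<omega>)) \<in> borel_measurable mu"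
    using su sw by (intro borel_measurable_diff borel_measurable_continuous_on[OF cs]) (auto simp: sqint_def)
  have Gm2: "(\<lambda>\<omega>. sg (v \<omega>) - sg (w \<omega>)) \<in> borel_measurable mu"
    using sv sw by (intro borel_measurable_diff borel_measurable_continuous_on[OF cs]) (auto simp: sqint_def)
  have Gd1: "depends_on (space mu) (Past (2*k)) (\<lambda>\<omega>. sg (u \<omega>) - sg (w \<omega>))" by (rule dep_comp2[OF ud wd])
  have Gd2: "depends_on (space mu) (Past (Suc (2*k))) (\<lambda>\<omega>. sg (v \<omega>) - sg (w \<omega>))" by (rule dep_comp2[OF vd wd'])
  have ed: "depends_on (space mu) (Past (2*k)) e" unfolding e_def by (rule dep_comp2[OF ud wd])
  have ed': "depends_on (space mu) (Past (Suc (2*k))) e" by (rule dep_mono[OF ed PP])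
  have b1d: "depends_on (space mu) (Past (Suc (2*k))) \<beta>1"
    unfolding \<beta>1_def by (rule dep_mono[OF incr_f_dep Cur_Past])
  have T1d: "depends_on (space mu) (Past (Suc (2*k))) T1"
    unfolding T1_def by (rule dep_comp2[OF dep_mono[OF Gd1 PP] b1d])
  have c1: "(\<integral>\<omega>. e \<omega> \<bullet> T1 \<omega> \<partial>mu) = 0"
    unfolding T1_def \<beta>1_def by (rule orth[OF i k1(1) se ed Gm1 Gb Gd1])
  have c2: "(\<integral>\<omega>. e \<omega> \<bullet> T2 \<omega> \<partial>mu) = 0"
    unfolding T2_def \<beta>2_def by (rule orth[OF i k1(2) se ed' Gm2 Gb Gd2])
  have c3: "(\<integral>\<omega>. T1 \<omega> \<bullet> T2 \<omega> \<partial>mu) = 0"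
    unfolding T2_def \<beta>2_def by (rule orth[OF i k1(2) sT1 T1d Gm2 Gb Gd2])
  have EP: "(\<integral>\<omega>. (norm (Pv \<omega>))\<^sup>2 \<partial>mu) = (\<integral>\<omega>. (norm (e \<omega>))\<^sup>2 \<partial>mu) + (\<integral>\<omega>. (norm (T1 \<omega>))\<^sup>2 \<partial>mu) + (\<integral>\<omega>. (norm (T2 \<omega>))\<^sup>2 \<partial>mu)"
  proof -
    have "(\<integral>\<omega>. (norm (Pv \<omega>))\<^sup>2 \<partial>mu) = (\<integral>\<omega>. (norm (e \<omega>))\<^sup>2 + (norm (T1 \<omega>))\<^sup>2 + (norm (T2 \<omega>))\<^sup>2
         + 2 * (e \<omega> \<bullet> T1 \<omega>) + 2 * (e \<omega> \<bullet> T2 \<omega>) + 2 * (T1 \<omega> \<bullet> T2 \<omega>) \<partial>mu)"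
      unfolding Pv_def by (simp only: norm3_expand)
    also have "\<dots> = (\<integral>\<omega>. (norm (e \<omega>))\<^sup>2 \<partial>mu) + (\<integral>\<omega>. (norm (T1 \<omega>))\<^sup>2 \<partial>mu) + (\<integral>\<omega>. (norm (T2 \<omega>))\<^sup>2 \<partial>mu)
         + 2 * (\<integral>\<omega>. e \<omega> \<bullet> T1 \<omega> \<partial>mu) + 2 * (\<integral>\<omega>. e \<omega> \<bullet> T2 \<omega> \<partial>mu) + 2 * (\<integral>\<omega>. T1 \<omega> \<bullet> T2 \<omega> \<partial>mu)"
      using sqint_norm2[OF se] sqint_norm2[OF sT1] sqint_norm2[OF sT2]
        integrable_inner_sq[OF se sT1] integrable_inner_sq[OF se sT2] integrable_inner_sq[OF sT1 sT2]
      by (simp add: Bochner_Integration.integral_add)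
    finally show ?thesis by (simp add: c1 c2 c3)
  qed
  have Um: "(\<lambda>\<omega>. U \<omega> j) \<in> borel_measurable mu" if "j < N" for j
    unfolding U_def using that by (intro Xf_meas) simp
  have Wm: "(\<lambda>\<omega>. W \<omega> j) \<in> borel_measurable mu" if "j < N" for j
    unfolding W_def using that by (intro Xc_meas) simp
  have Vm: "(\<lambda>\<omega>. V \<omega> j) \<in> borel_measurable mu" if "j < N" for j
    unfolding V_def using that by (intro Xf_meas) simp
  have um: "u \<in> borel_measurable mu" using su by (simp add: sqint_def)
  have wm: "w \<in> borel_measurable mu" using sw by (simp add: sqint_def)
  have vm: "v \<in> borel_measurable mu" using sv by (simp add: sqint_def)
  have sA1: "sqint mu A1" unfolding A1_def by (rule adiff_sqint[OF Um um Wm wm])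
  have sA2: "sqint mu A2" unfolding A2_def by (rule adiff_sqint[OF Vm vm Wm wm])
  have sQ: "sqint mu Qv" unfolding Qv_def by (intro sqint_add sqint_scaleR sA1 sA2)
  have sP: "sqint mu Pv" unfolding Pv_def by (intro sqint_add se sT1 sT2)
  have Deq: "D = (\<lambda>\<omega>. Pv \<omega> + Qv \<omega>)" by (rule ext) (rule ident)
  have sD: "sqint mu D" unfolding Deq by (rule sqint_add[OF sP sQ])
  have sUW: "sqint mu (\<lambda>\<omega>. U \<omega> j - W \<omega> j)" if "j < N" for j
    unfolding U_def W_def using that k1 by (intro sqint_diff Xf_sqint Xc_sqint) auto
  have sVW: "sqint mu (\<lambda>\<omega>. V \<omega> j - W \<omega> j)" if "j < N" for j
    unfolding V_def W_def using that k1 by (intro sqint_diff Xf_sqint Xc_sqint) auto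
  have sVw: "sqint mu (\<lambda>\<omega>. v \<omega> - w \<omega>)" by (rule sqint_diff[OF sv sw])
  define s where "s = 3 * b + c0 * h"
  have Npos: "0 < real N" using N1 by simp
  have Ee: "(\<integral>\<omega>. (norm (e \<omega>))\<^sup>2 \<partial>mu) \<le> b" unfolding e_def u_def w_def by (rule IH[OF i])
  have Evw: "(\<integral>\<omega>. (norm (v \<omega> - w \<omega>))\<^sup>2 \<partial>mu) \<le> s"
    unfolding s_def v_def w_def by (rule vw_bound(2)[OF k1(1) i IH[OF i]])
  define SU where "SU \<omega> = (\<Sum>j<N. (norm (U \<omega> j - W \<omega> j))\<^sup>2) / N" for \<omega>
  define SV where "SV \<omega> = (\<Sum>j<N. (norm (V \<omega> j - W \<omega> j))\<^sup>2) / N" for \<omega>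
  have ESU: "(\<integral>\<omega>. (\<Sum>j<N. (norm (U \<omega> j - W \<omega> j))\<^sup>2) / N \<partial>mu) \<le> b"
  proof -
    have "(\<integral>\<omega>. (\<Sum>j<N. (norm (U \<omega> j - W \<omega> j))\<^sup>2) / N \<partial>mu) = (\<Sum>j<N. (\<integral>\<omega>. (norm (U \<omega> j - W \<omega> j))\<^sup>2 \<partial>mu)) / N"
      using sqint_norm2[OF sUW] by (simp add: Bochner_Integration.integral_sum)
    also have "\<dots> \<le> (\<Sum>j<N. b) / N"
      using Npos by (intro divide_right_mono sum_mono) (auto simp: U_def W_def intro: IH)
    also have "\<dots> = b" using Npos by simp
    finally show ?thesis .
  qed
  have ESV: "(\<integral>\<omega>. (\<Sum>j<N. (norm (V \<omega> j - W \<omega> j))\<^sup>2) / N \<partial>mu) \<le> s"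
  proof -
    have "(\<integral>\<omega>. (\<Sum>j<N. (norm (V \<omega> j - W \<omega> j))\<^sup>2) / N \<partial>mu) = (\<Sum>j<N. (\<integral>\<omega>. (norm (V \<omega> j - W \<omega> j))\<^sup>2 \<partial>mu)) / N"
      using sqint_norm2[OF sVW] by (simp add: Bochner_Integration.integral_sum)
    also have "\<dots> \<le> (\<Sum>j<N. s) / N"
      using Npos by (intro divide_right_mono sum_mono) (auto simp: V_def W_def s_def intro: vw_bound(2)[OF k1(1) _ IH])
    also have "\<dots> = s" using Npos by simp
    finally show ?thesis .
  qed
  have iSU: "integrable mu (\<lambda>\<omega>. (\<Sum>j<N. (norm (U \<omega> j - W \<omega> j))\<^sup>2) / N)"
    using sqint_norm2[OF sUW] by (intro integrable_divide Bochner_Integration.integrable_sum) auto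
  have iSV: "integrable mu (\<lambda>\<omega>. (\<Sum>j<N. (norm (V \<omega> j - W \<omega> j))\<^sup>2) / N)"
    using sqint_norm2[OF sVW] by (intro integrable_divide Bochner_Integration.integrable_sum) auto
  have EA1: "(\<integral>\<omega>. (norm (A1 \<omega>))\<^sup>2 \<partial>mu) \<le> K\<^sup>2 * (1 + K\<^sup>2) * b + K\<^sup>2 * K\<^sup>2 * b"
  proof -
    have "(\<integral>\<omega>. (norm (A1 \<omega>))\<^sup>2 \<partial>mu) \<le> (\<integral>\<omega>. K\<^sup>2 * (1 + K\<^sup>2) * (norm (e \<omega>))\<^sup>2 + K\<^sup>2 * K\<^sup>2 * SU \<omega> \<partial>mu)"
    proof (rule integral_mono)
      show "integrable mu (\<lambda>\<omega>. (norm (A1 \<omega>))\<^sup>2)" by (rule sqint_norm2[OF sA1])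
      show "integrable mu (\<lambda>\<omega>. K\<^sup>2 * (1 + K\<^sup>2) * (norm (e \<omega>))\<^sup>2 + K\<^sup>2 * K\<^sup>2 * SU \<omega>)"
        using sqint_norm2[OF se] iSU[folded SU_def] by (intro Bochner_Integration.integrable_add integrable_mult_right)
      fix \<omega>
      show "(norm (A1 \<omega>))\<^sup>2 \<le> K\<^sup>2 * (1 + K\<^sup>2) * (norm (e \<omega>))\<^sup>2 + K\<^sup>2 * K\<^sup>2 * SU \<omega>"
        unfolding A1_def e_def SU_def by (rule a_diff_sq)
    qed
    also have "\<dots> = K\<^sup>2 * (1 + K\<^sup>2) * (\<integral>\<omega>. (norm (e \<omega>))\<^sup>2 \<partial>mu) + K\<^sup>2 * K\<^sup>2 * (\<integral>\<omega>. SU \<omega> \<partial>mu)"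
      using sqint_norm2[OF se] iSU[folded SU_def] by (simp only: Bochner_Integration.integral_add integrable_mult_right integral_mult_right_zero)
    also have "\<dots> \<le> K\<^sup>2 * (1 + K\<^sup>2) * b + K\<^sup>2 * K\<^sup>2 * b"
      using Ee ESU[folded SU_def] by (intro add_mono mult_left_mono) auto
    finally show ?thesis .
  qed
  have EA2: "(\<integral>\<omega>. (norm (A2 \<omega>))\<^sup>2 \<partial>mu) \<le> K\<^sup>2 * (1 + K\<^sup>2) * s + K\<^sup>2 * K\<^sup>2 * s"
  proof -
    have "(\<integral>\<omega>. (norm (A2 \<omega>))\<^sup>2 \<partial>mu) \<le> (\<integral>\<omega>. K\<^sup>2 * (1 + K\<^sup>2) * (norm (v \<omega> - w \<omega>))\<^sup>2 + K\<^sup>2 * K\<^sup>2 * SV \<omega> \<partial>mu)"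
    proof (rule integral_mono)
      show "integrable mu (\<lambda>\<omega>. (norm (A2 \<omega>))\<^sup>2)" by (rule sqint_norm2[OF sA2])
      show "integrable mu (\<lambda>\<omega>. K\<^sup>2 * (1 + K\<^sup>2) * (norm (v \<omega> - w \<omega>))\<^sup>2 + K\<^sup>2 * K\<^sup>2 * SV \<omega>)"
        using sqint_norm2[OF sVw] iSV[folded SV_def] by (intro Bochner_Integration.integrable_add integrable_mult_right)
      fix \<omega>
      show "(norm (A2 \<omega>))\<^sup>2 \<le> K\<^sup>2 * (1 + K\<^sup>2) * (norm (v \<omega> - w \<omega>))\<^sup>2 + K\<^sup>2 * K\<^sup>2 * SV \<omega>"
        unfolding A2_def SV_def by (rule a_diff_sq)
    qed
    also have "\<dots> = K\<^sup>2 * (1 + K\<^sup>2) * (\<integral>\<omega>. (norm (v \<omega> - w \<omega>))\<^sup>2 \<partial>mu) + K\<^sup>2 * K\<^sup>2 * (\<integral>\<omega>. SV \<omega> \<partial>mu)"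
      using sqint_norm2[OF sVw] iSV[folded SV_def] by (simp only: Bochner_Integration.integral_add integrable_mult_right integral_mult_right_zero)
    also have "\<dots> \<le> K\<^sup>2 * (1 + K\<^sup>2) * s + K\<^sup>2 * K\<^sup>2 * s"
      using Evw ESV[folded SV_def] by (intro add_mono mult_left_mono) auto
    finally show ?thesis .
  qed
  have EQ: "(\<integral>\<omega>. (norm (Qv \<omega>))\<^sup>2 \<partial>mu) \<le> 2 * h\<^sup>2 * (K\<^sup>2 * (1 + 2 * K\<^sup>2)) * (b + s)"
  proof -
    have "(\<integral>\<omega>. (norm (Qv \<omega>))\<^sup>2 \<partial>mu) \<le> (\<integral>\<omega>. 2 * h\<^sup>2 * (norm (A1 \<omega>))\<^sup>2 + 2 * h\<^sup>2 * (norm (A2 \<omega>))\<^sup>2 \<partial>mu)"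
    proof (rule integral_mono)
      show "integrable mu (\<lambda>\<omega>. (norm (Qv \<omega>))\<^sup>2)" by (rule sqint_norm2[OF sQ])
      show "integrable mu (\<lambda>\<omega>. 2 * h\<^sup>2 * (norm (A1 \<omega>))\<^sup>2 + 2 * h\<^sup>2 * (norm (A2 \<omega>))\<^sup>2)"
        using sqint_norm2[OF sA1] sqint_norm2[OF sA2] by (intro Bochner_Integration.integrable_add integrable_mult_right)
      fix \<omega>
      have "(norm (Qv \<omega>))\<^sup>2 \<le> 2 * (norm (h *\<^sub>R A1 \<omega>))\<^sup>2 + 2 * (norm (h *\<^sub>R A2 \<omega>))\<^sup>2"
        unfolding Qv_def by (rule norm2_sum2_le)
      then show "(norm (Qv \<omega>))\<^sup>2 \<le> 2 * h\<^sup>2 * (norm (A1 \<omega>))\<^sup>2 + 2 * h\<^sup>2 * (norm (A2 \<omega>))\<^sup>2"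
        by (simp add: power_mult_distrib)
    qed
    also have "\<dots> = 2 * h\<^sup>2 * (\<integral>\<omega>. (norm (A1 \<omega>))\<^sup>2 \<partial>mu) + 2 * h\<^sup>2 * (\<integral>\<omega>. (norm (A2 \<omega>))\<^sup>2 \<partial>mu)"
      using sqint_norm2[OF sA1] sqint_norm2[OF sA2] by (simp add: Bochner_Integration.integral_add)
    also have "\<dots> \<le> 2 * h\<^sup>2 * (K\<^sup>2 * (1 + K\<^sup>2) * b + K\<^sup>2 * K\<^sup>2 * b) + 2 * h\<^sup>2 * (K\<^sup>2 * (1 + K\<^sup>2) * s + K\<^sup>2 * K\<^sup>2 * s)"
      using EA1 EA2 by (intro add_mono mult_left_mono) auto
    also have "\<dots> = 2 * h\<^sup>2 * (K\<^sup>2 * (1 + 2 * K\<^sup>2)) * (b + s)"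
      by (simp add: algebra_simps power2_eq_square)
    finally show ?thesis .
  qed
  have hdK: "0 \<le> h * real CARD('d) * K\<^sup>2" using h_pos by simp
  have EPb: "(\<integral>\<omega>. (norm (Pv \<omega>))\<^sup>2 \<partial>mu) \<le> b + h * real CARD('d) * K\<^sup>2 * (b + s)"
  proof -
    have "(\<integral>\<omega>. (norm (T1 \<omega>))\<^sup>2 \<partial>mu) \<le> h * real CARD('d) * K\<^sup>2 * b"
      using ET1 Ee hdK by (meson mult_left_mono order_trans)
    moreover have "(\<integral>\<omega>. (norm (T2 \<omega>))\<^sup>2 \<partial>mu) \<le> h * real CARD('d) * K\<^sup>2 * s"
      using ET2 Evw hdK by (meson mult_left_mono order_trans)
    ultimately show ?thesis using EP Ee by (simp add: algebra_simps)
  qed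
  have ED: "(\<integral>\<omega>. (norm (D \<omega>))\<^sup>2 \<partial>mu) \<le> (1 + h) * (\<integral>\<omega>. (norm (Pv \<omega>))\<^sup>2 \<partial>mu) + (1 + 1/h) * (\<integral>\<omega>. (norm (Qv \<omega>))\<^sup>2 \<partial>mu)"
  proof -
    have "(\<integral>\<omega>. (norm (D \<omega>))\<^sup>2 \<partial>mu) \<le> (\<integral>\<omega>. (1 + h) * (norm (Pv \<omega>))\<^sup>2 + (1 + 1/h) * (norm (Qv \<omega>))\<^sup>2 \<partial>mu)"
    proof (rule integral_mono)
      show "integrable mu (\<lambda>\<omega>. (norm (D \<omega>))\<^sup>2)" by (rule sqint_norm2[OF sD])
      show "integrable mu (\<lambda>\<omega>. (1 + h) * (norm (Pv \<omega>))\<^sup>2 + (1 + 1/h) * (norm (Qv \<omega>))\<^sup>2)"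
        using sqint_norm2[OF sP] sqint_norm2[OF sQ] by (intro Bochner_Integration.integrable_add integrable_mult_right)
      fix \<omega>
      show "(norm (D \<omega>))\<^sup>2 \<le> (1 + h) * (norm (Pv \<omega>))\<^sup>2 + (1 + 1/h) * (norm (Qv \<omega>))\<^sup>2"
        unfolding ident by (rule norm_young[OF h_pos])
    qed
    also have "\<dots> = (1 + h) * (\<integral>\<omega>. (norm (Pv \<omega>))\<^sup>2 \<partial>mu) + (1 + 1/h) * (\<integral>\<omega>. (norm (Qv \<omega>))\<^sup>2 \<partial>mu)"
      using sqint_norm2[OF sP] sqint_norm2[OF sQ] by (simp add: Bochner_Integration.integral_add)
    finally show ?thesis .
  qed
  have c00: "0 \<le> c0" unfolding c0_def by simp
  have bs: "0 \<le> b + s" unfolding s_def using b0 c00 h_pos by simp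
  have "(\<integral>\<omega>. (norm (D \<omega>))\<^sup>2 \<partial>mu) \<le> (1 + Cst * h) * b + Cst * h\<^sup>2"
    unfolding Cst_def
    by (rule final_arith[OF h_pos h_le1 b0 K0 _ c00 _ EPb EQ ED bs]) (simp_all add: s_def)
  then show ?thesis unfolding D_def .
qed

end


context scheme
begin

lemma err_bound:
  "2*k \<le> n \<Longrightarrow> i \<le> N \<Longrightarrow> (\<integral>\<omega>. (norm (Xf \<omega> (2*k) i - Xc \<omega> k i))\<^sup>2 \<partial>mu) \<le> Cst * h\<^sup>2 * k * (1 + Cst * h) ^ k"
proof (induction k arbitrary: i)
  case 0
  then show ?case by (simp add: Xf_0 Xc_0)
next
  case (Suc k)
  have C0: "0 \<le> Cst" using Cst_pos by simp
  have q0: "1 \<le> 1 + Cst * h" using C0 h_pos by simp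
  have b0: "0 \<le> Cst * h\<^sup>2 * k * (1 + Cst * h) ^ k" using C0 q0 by simp
  have st: "(\<integral>\<omega>. (norm (Xf \<omega> (Suc (Suc (2*k))) i - Xc \<omega> (Suc k) i))\<^sup>2 \<partial>mu)
      \<le> (1 + Cst * h) * (Cst * h\<^sup>2 * k * (1 + Cst * h) ^ k) + Cst * h\<^sup>2"
    using Suc.prems by (intro err_step b0 Suc.IH) auto
  have "(1 + Cst * h) * (Cst * h\<^sup>2 * k * (1 + Cst * h) ^ k) + Cst * h\<^sup>2
      = Cst * h\<^sup>2 * (k * (1 + Cst * h) ^ Suc k + 1)"
    by (simp add: algebra_simps)
  also have "\<dots> \<le> Cst * h\<^sup>2 * (k * (1 + Cst * h) ^ Suc k + (1 + Cst * h) ^ Suc k)"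
    using C0 q0 by (intro mult_left_mono add_left_mono one_le_power) auto
  also have "\<dots> = Cst * h\<^sup>2 * real (Suc k) * (1 + Cst * h) ^ Suc k"
    by (simp add: algebra_simps)
  finally show ?case using st by (simp add: mult_2)
qed

lemma err_final:
  assumes "2*k \<le> n" "i \<le> N" "h * k \<le> Tb"
  shows "(\<integral>\<omega>. (norm (Xf \<omega> (2*k) i - Xc \<omega> k i))\<^sup>2 \<partial>mu) \<le> Cst * Tb * exp (Cst * Tb) * h"
proof -
  have C0: "0 \<le> Cst" using Cst_pos by simp
  have T0: "0 \<le> Tb" using assms(3) h_pos by (meson mult_nonneg_nonneg of_nat_0_le_iff order_trans less_imp_le)
  have "(1 + Cst * h) ^ k \<le> exp (Cst * h) ^ k"
    using C0 h_pos by (intro power_mono) (auto simp: exp_ge_add_one_self add.commute)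
  also have "\<dots> = exp (Cst * (h * k))" by (simp add: exp_of_nat_mult[symmetric] mult.commute mult.left_commute)
  also have "\<dots> \<le> exp (Cst * Tb)" using C0 assms(3) by (simp add: mult_left_mono)
  finally have p: "(1 + Cst * h) ^ k \<le> exp (Cst * Tb)" .
  have "Cst * h\<^sup>2 * k * (1 + Cst * h) ^ k = (Cst * h) * (h * k) * (1 + Cst * h) ^ k"
    by (simp add: power2_eq_square)
  also have "\<dots> \<le> (Cst * h) * Tb * exp (Cst * Tb)"
    using C0 h_pos assms(3) p T0 by (intro mult_mono) auto
  finally show ?thesis using err_bound[OF assms(1,2)] by (simp add: mult_ac)
qed

end


lemma C2b_bd_mono:
  assumes "C2b_bd S M f" "M \<le> M'" shows "C2b_bd S M' f"
proof -
  obtain Df D2 where h: "(\<forall>x\<in>S. (f has_derivative blinfun_apply (Df x)) (at x within S))"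
      "(\<forall>x\<in>S. (Df has_derivative blinfun_apply (D2 x)) (at x within S))" "continuous_on S D2"
      "(\<forall>x\<in>S. norm (f x) \<le> M \<and> norm (Df x) \<le> M \<and> norm (D2 x) \<le> M)"
    using assms(1) unfolding C2b_bd_def by blast
  have "\<forall>x\<in>S. norm (f x) \<le> M' \<and> norm (Df x) \<le> M' \<and> norm (D2 x) \<le> M'"
    using h(4) assms(2) by auto
  then show ?thesis unfolding C2b_bd_def using h(1-3) by blast
qed

lemma C2b_UNIV_lip:
  fixes f :: "'a::euclidean_space \<Rightarrow> 'b::real_normed_vector"
  assumes "C2b_bd UNIV M f"
  shows "norm (f x - f y) \<le> M * norm (x - y)" and "norm (f x) \<le> M"
proof -
  obtain Df :: "'a \<Rightarrow> 'a \<Rightarrow>\<^sub>L 'b" where d: "\<And>x. (f has_derivative blinfun_apply (Df x)) (at x within UNIV)"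
    and b: "\<And>x. norm (f x) \<le> M \<and> norm (Df x) \<le> M"
    using assms unfolding C2b_bd_def by blast
  show "norm (f x) \<le> M" using b by blast
  have on: "onorm (blinfun_apply (Df z)) \<le> M" for z
  proof (rule onorm_le)
    fix v
    have "norm (blinfun_apply (Df z) v) \<le> norm (Df z) * norm v" by (rule norm_blinfun)
    also have "\<dots> \<le> M * norm v" using b[of z] by (intro mult_right_mono) auto
    finally show "norm (blinfun_apply (Df z) v) \<le> M * norm v" .
  qed
  show "norm (f x - f y) \<le> M * norm (x - y)"
    by (rule differentiable_bound[of UNIV f "\<lambda>z. blinfun_apply (Df z)"]) (use d on in auto)
qed

lemma C2b_slice_lip:
  fixes F :: "'p::euclidean_space \<times> 'a::euclidean_space \<Rightarrow> 'b::real_normed_vector"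
  assumes "C2b_bd (Th \<times> UNIV) M F" and th: "\<theta> \<in> Th"
  shows "norm (F (\<theta>, x) - F (\<theta>, y)) \<le> M * norm (x - y)" and "norm (F (\<theta>, x)) \<le> M"
proof -
  obtain Df :: "('p \<times> 'a) \<Rightarrow> (('p \<times> 'a) \<Rightarrow>\<^sub>L 'b)" where d: "\<And>z. z \<in> Th \<times> UNIV \<Longrightarrow> (F has_derivative blinfun_apply (Df z)) (at z within Th \<times> UNIV)"
    and b: "\<And>z. z \<in> Th \<times> UNIV \<Longrightarrow> norm (F z) \<le> M \<and> norm (Df z) \<le> M"
    using assms unfolding C2b_bd_def by blast
  show "norm (F (\<theta>, x)) \<le> M" using b th by blast
  have dd: "((\<lambda>x. F (\<theta>, x)) has_derivative (\<lambda>v. blinfun_apply (Df (\<theta>, z)) (0, v))) (at z within UNIV)" for z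
  proof (rule has_derivative_in_compose2[of "Th \<times> UNIV" F "\<lambda>z. blinfun_apply (Df z)" "\<lambda>x. (\<theta>, x)" UNIV z "\<lambda>v. (0, v)"])
    show "\<And>x. x \<in> Th \<times> UNIV \<Longrightarrow> (F has_derivative blinfun_apply (Df x)) (at x within Th \<times> UNIV)" by (rule d)
    show "(\<lambda>x. (\<theta>, x)) ` UNIV \<subseteq> Th \<times> UNIV" using th by auto
    show "((\<lambda>x. (\<theta>, x)) has_derivative (\<lambda>v. (0, v))) (at z within UNIV)"
      by (intro has_derivative_Pair has_derivative_const has_derivative_ident)
  qed simp
  have on: "onorm (\<lambda>v. blinfun_apply (Df (\<theta>, z)) (0, v)) \<le> M" for z
  proof (rule onorm_le)
    fix v :: 'a
    have "norm (blinfun_apply (Df (\<theta>, z)) (0, v)) \<le> norm (Df (\<theta>, z)) * norm ((0::'p), v)" by (rule norm_blinfun)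
    also have "\<dots> = norm (Df (\<theta>, z)) * norm v" by (simp add: norm_Pair)
    also have "\<dots> \<le> M * norm v" using b[of "(\<theta>, z)"] th by (intro mult_right_mono) auto
    finally show "norm (blinfun_apply (Df (\<theta>, z)) (0, v)) \<le> M * norm v" .
  qed
  show "norm (F (\<theta>, x) - F (\<theta>, y)) \<le> M * norm (x - y)"
    by (rule differentiable_bound[of UNIV "\<lambda>x. F (\<theta>, x)" "\<lambda>z v. blinfun_apply (Df (\<theta>, z)) (0, v)"])
       (use dd on in auto)
qed

lemma lip_cont:
  fixes f :: "'a::real_normed_vector \<Rightarrow> 'b::real_normed_vector"
  assumes "\<And>x y. norm (f x - f y) \<le> L * norm (x - y)"
  shows "continuous_on UNIV f"
proof -
  have "(\<bar>L\<bar> + 1)-lipschitz_on UNIV f"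
  proof (rule lipschitz_onI)
    fix x y :: 'a
    have "norm (f x - f y) \<le> L * norm (x - y)" by (rule assms)
    also have "\<dots> \<le> (\<bar>L\<bar> + 1) * norm (x - y)" by (intro mult_right_mono) auto
    finally show "dist (f x) (f y) \<le> (\<bar>L\<bar> + 1) * dist x y" by (simp add: dist_norm)
  qed simp
  then show ?thesis by (rule lipschitz_on_continuous_on)
qed

lemma prod_lip:
  fixes f g :: "'s \<Rightarrow> real"
  assumes "finite S" "1 \<le> B" "\<And>s. s \<in> S \<Longrightarrow> \<bar>f s\<bar> \<le> B" "\<And>s. s \<in> S \<Longrightarrow> \<bar>g s\<bar> \<le> B"
  shows "\<bar>(\<Prod>s\<in>S. f s) - (\<Prod>s\<in>S. g s)\<bar> \<le> B ^ card S * (\<Sum>s\<in>S. \<bar>f s - g s\<bar>)"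
  using assms
proof (induction S rule: finite_induct)
  case empty
  then show ?case by simp
next
  case (insert x F)
  have pf: "\<bar>\<Prod>s\<in>F. f s\<bar> \<le> B ^ card F"
  proof -
    have "\<bar>\<Prod>s\<in>F. f s\<bar> = (\<Prod>s\<in>F. \<bar>f s\<bar>)" by (rule abs_prod)
    also have "\<dots> \<le> (\<Prod>s\<in>F. B)" using insert.prems by (intro prod_mono) auto
    finally show ?thesis by simp
  qed
  have gx: "\<bar>g x\<bar> \<le> B" using insert.prems by simp
  have IH: "\<bar>(\<Prod>s\<in>F. f s) - (\<Prod>s\<in>F. g s)\<bar> \<le> B ^ card F * (\<Sum>s\<in>F. \<bar>f s - g s\<bar>)"
    using insert.prems by (intro insert.IH) auto
  have "(\<Prod>s\<in>insert x F. f s) - (\<Prod>s\<in>insert x F. g s) =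
        (f x - g x) * (\<Prod>s\<in>F. f s) + g x * ((\<Prod>s\<in>F. f s) - (\<Prod>s\<in>F. g s))"
    using insert.hyps by (simp add: algebra_simps)
  then have "\<bar>(\<Prod>s\<in>insert x F. f s) - (\<Prod>s\<in>insert x F. g s)\<bar> \<le>
        \<bar>f x - g x\<bar> * \<bar>\<Prod>s\<in>F. f s\<bar> + \<bar>g x\<bar> * \<bar>(\<Prod>s\<in>F. f s) - (\<Prod>s\<in>F. g s)\<bar>"
    by (simp add: abs_mult[symmetric] abs_triangle_ineq)
  also have "\<dots> \<le> \<bar>f x - g x\<bar> * B ^ card F + B * (B ^ card F * (\<Sum>s\<in>F. \<bar>f s - g s\<bar>))"
    using pf gx IH by (intro add_mono mult_mono) auto
  also have "\<dots> \<le> B ^ card (insert x F) * (\<Sum>s\<in>insert x F. \<bar>f s - g s\<bar>)"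
  proof -
    have "\<bar>f x - g x\<bar> * B ^ card F \<le> \<bar>f x - g x\<bar> * B ^ Suc (card F)"
      using insert.prems(1) by (intro mult_left_mono power_increasing) auto
    then show ?thesis using insert.hyps by (simp add: algebra_simps)
  qed
  finally show ?case .
qed


lemma integrand_bound:
  fixes \<phi> :: "(real^'p::finite) \<times> (real^'d::finite^'t::finite) \<Rightarrow> real"
    and G :: "real^'p \<Rightarrow> real^'d \<Rightarrow> 'y \<Rightarrow> real" and y :: "nat \<Rightarrow> 'y" and tix :: "'t \<Rightarrow> nat"
  assumes g0: "0 < g" and gle: "\<And>x yy. g \<le> G \<theta> x yy" and B1: "1 \<le> B"
    and pb: "\<And>x. \<bar>\<phi> (\<theta>, x)\<bar> \<le> B" and pl: "\<And>x x'. \<bar>\<phi> (\<theta>, x) - \<phi> (\<theta>, x')\<bar> \<le> B * norm (x - x')"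
    and gb: "\<And>x t. \<bar>G \<theta> x (y (tix t))\<bar> \<le> B"
    and gl: "\<And>x x' t. \<bar>G \<theta> x (y (tix t)) - G \<theta> x' (y (tix t))\<bar> \<le> B * norm (x - x')"
  shows "(\<phi> (\<theta>, x) * (\<Prod>t\<in>UNIV. Hchk G (y (tix t)) \<theta> (x $ t) (x' $ t))
           - \<phi> (\<theta>, x') * (\<Prod>t\<in>UNIV. Hchk G (y (tix t)) \<theta> (x' $ t) (x $ t)))\<^sup>2 * Hprod G y tix \<theta> x x'
         \<le> (B ^ (CARD('t) + 1) * (1 + B * CARD('t)))\<^sup>2 / g ^ CARD('t) * (\<Sum>t\<in>UNIV. (norm (x $ t - x' $ t))\<^sup>2)"
proof -
  define H where "H t = Hk G (y (tix t)) \<theta> (x $ t) (x' $ t)" for t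
  define PH where "PH = (\<Prod>t\<in>UNIV. H t)"
  define Px where "Px = (\<Prod>t\<in>UNIV. G \<theta> (x $ t) (y (tix t)))"
  define Px' where "Px' = (\<Prod>t\<in>UNIV. G \<theta> (x' $ t) (y (tix t)))"
  have Hg: "g \<le> H t" for t
    using gle[of "x $ t" "y (tix t)"] gle[of "x' $ t" "y (tix t)"] unfolding H_def Hk_def by simp
  have PHg: "g ^ CARD('t) \<le> PH"
  proof -
    have "(\<Prod>t\<in>(UNIV::'t set). g) \<le> PH" unfolding PH_def using g0 Hg by (intro prod_mono) (auto intro: less_imp_le)
    then show ?thesis by simp
  qed
  have gT: "0 < g ^ CARD('t)" using g0 by simp
  have PH0: "0 < PH" using PHg gT by linarith
  have Hsym: "Hk G (y (tix t)) \<theta> (x' $ t) (x $ t) = H t" for t unfolding H_def Hk_def by simp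
  have c1: "(\<Prod>t\<in>UNIV. Hchk G (y (tix t)) \<theta> (x $ t) (x' $ t)) = Px / PH"
    unfolding Hchk_def Px_def PH_def H_def by (rule prod_dividef)
  have c2: "(\<Prod>t\<in>UNIV. Hchk G (y (tix t)) \<theta> (x' $ t) (x $ t)) = Px' / PH"
    unfolding Hchk_def Px'_def PH_def Hsym by (rule prod_dividef)
  have hp: "Hprod G y tix \<theta> x x' = PH" unfolding Hprod_def PH_def H_def ..
  define L where "L = B ^ (CARD('t) + 1) * (1 + B * CARD('t))"
  have B0: "0 \<le> B" using B1 by simp
  have Pxb: "\<bar>Px\<bar> \<le> B ^ CARD('t)"
  proof -
    have "\<bar>Px\<bar> = (\<Prod>t\<in>UNIV. \<bar>G \<theta> (x $ t) (y (tix t))\<bar>)" unfolding Px_def by (rule abs_prod)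
    also have "\<dots> \<le> (\<Prod>t\<in>(UNIV::'t set). B)" using gb by (intro prod_mono) auto
    finally show ?thesis by simp
  qed
  have Pdiff: "\<bar>Px - Px'\<bar> \<le> B ^ CARD('t) * (B * CARD('t) * norm (x - x'))"
  proof -
    have "\<bar>Px - Px'\<bar> \<le> B ^ card (UNIV::'t set) * (\<Sum>t\<in>UNIV. \<bar>G \<theta> (x $ t) (y (tix t)) - G \<theta> (x' $ t) (y (tix t))\<bar>)"
      unfolding Px_def Px'_def by (rule prod_lip) (use B1 gb in auto)
    also have "\<dots> \<le> B ^ CARD('t) * (\<Sum>t\<in>(UNIV::'t set). B * norm (x - x'))"
    proof (intro mult_left_mono sum_mono)
      fix t
      have "\<bar>G \<theta> (x $ t) (y (tix t)) - G \<theta> (x' $ t) (y (tix t))\<bar> \<le> B * norm (x $ t - x' $ t)" by (rule gl)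
      also have "\<dots> \<le> B * norm (x - x')"
        using B0 Finite_Cartesian_Product.norm_nth_le[of "x - x'" t] by (intro mult_left_mono) auto
      finally show "\<bar>G \<theta> (x $ t) (y (tix t)) - G \<theta> (x' $ t) (y (tix t))\<bar> \<le> B * norm (x - x')" .
    qed (use B0 in simp)
    finally show ?thesis by (simp add: mult_ac)
  qed
  have Psi: "\<bar>\<phi> (\<theta>, x) * Px - \<phi> (\<theta>, x') * Px'\<bar> \<le> L * norm (x - x')"
  proof -
    have "\<phi> (\<theta>, x) * Px - \<phi> (\<theta>, x') * Px' = (\<phi> (\<theta>, x) - \<phi> (\<theta>, x')) * Px + \<phi> (\<theta>, x') * (Px - Px')"
      by (simp add: algebra_simps)
    then have "\<bar>\<phi> (\<theta>, x) * Px - \<phi> (\<theta>, x') * Px'\<bar> \<le> \<bar>\<phi> (\<theta>, x) - \<phi> (\<theta>, x')\<bar> * \<bar>Px\<bar> + \<bar>\<phi> (\<theta>, x')\<bar> * \<bar>Px - Px'\<bar>"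
      by (simp add: abs_mult[symmetric] abs_triangle_ineq)
    also have "\<dots> \<le> (B * norm (x - x')) * B ^ CARD('t) + B * (B ^ CARD('t) * (B * CARD('t) * norm (x - x')))"
      using pl pb Pxb Pdiff B0 by (intro add_mono mult_mono) auto
    also have "\<dots> = L * norm (x - x')" unfolding L_def by (simp add: algebra_simps)
    finally show ?thesis .
  qed
  have "(\<phi> (\<theta>, x) * (Px / PH) - \<phi> (\<theta>, x') * (Px' / PH))\<^sup>2 * PH = (\<phi> (\<theta>, x) * Px - \<phi> (\<theta>, x') * Px')\<^sup>2 / PH"
    using PH0 by (simp add: field_simps power2_eq_square)
  also have "\<dots> \<le> (\<phi> (\<theta>, x) * Px - \<phi> (\<theta>, x') * Px')\<^sup>2 / g ^ CARD('t)"
    using PHg gT by (intro divide_left_mono) auto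
  also have "\<dots> \<le> (L * norm (x - x'))\<^sup>2 / g ^ CARD('t)"
  proof -
    have "\<bar>\<phi> (\<theta>, x) * Px - \<phi> (\<theta>, x') * Px'\<bar>\<^sup>2 \<le> (L * norm (x - x'))\<^sup>2"
      by (rule power_mono[OF Psi abs_ge_zero])
    then show ?thesis using gT by (intro divide_right_mono) simp_all
  qed
  also have "\<dots> = L\<^sup>2 / g ^ CARD('t) * (\<Sum>t\<in>UNIV. (norm (x $ t - x' $ t))\<^sup>2)"
    by (simp add: power_mult_distrib norm2_vec2)
  finally show ?thesis unfolding c1 c2 hp L_def .
qed


lemma Delta_prev: "1 \<le> l \<Longrightarrow> Delta (l - 1) = 2 * Delta l"
  unfolding Delta_def by (cases l) auto

lemma coupled_eq:
  assumes sch: "scheme (a \<theta>) (xi \<theta>) sg N l n K"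
  shows "coupled_pair a xi sg x0 tix l N \<theta> \<omega> =
    ((\<chi> t. scheme.Xf (a \<theta>) (xi \<theta>) sg x0 N l \<omega> (2 * (tix t * 2^(l-1))) N),
     (\<chi> t. scheme.Xc (a \<theta>) (xi \<theta>) sg x0 N l \<omega> (tix t * 2^(l-1)) N))"
proof -
  interpret S: scheme "a \<theta>" "xi \<theta>" sg x0 N l n K by (rule sch)
  have l: "1 \<le> l" by (rule S.l1)
  have p: "tix t * 2^l = 2 * (tix t * 2^(l-1))" for t
    using l by (cases l) auto
  show ?thesis
    unfolding coupled_pair_def S.Xf_def S.Xc_def Yp_def Delta_prev[OF l] p by simp
qed


lemma Delta_half: "1 \<le> l \<Longrightarrow> Delta l * 2 ^ (l - 1) = 1 / 2"
  unfolding Delta_def by (cases l) (auto simp: power_divide)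

lemma inner_bounds:
  fixes a :: "real^'p::finite \<Rightarrow> (real^'d::finite) \<times> real \<Rightarrow> real^'d"
    and xi :: "real^'p \<Rightarrow> (real^'d) \<times> (real^'d) \<Rightarrow> real"
    and sg :: "real^'d \<Rightarrow> real^'d^'d"
    and G :: "real^'p \<Rightarrow> real^'d \<Rightarrow> 'y \<Rightarrow> real"
    and y :: "nat \<Rightarrow> 'y" and tix :: "'t::finite \<Rightarrow> nat"
    and \<phi> :: "(real^'p) \<times> (real^'d^'t) \<Rightarrow> real" and B g K :: real
  assumes sch: "scheme (a \<theta>) (xi \<theta>) sg N l (CARD('t) * 2^l) K"
    and tixb: "\<And>t. tix t \<le> CARD('t)"
    and g0: "0 < g" and gle: "\<And>x yy. g \<le> G \<theta> x yy" and B1: "1 \<le> B"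
    and pb: "\<And>x. \<bar>\<phi> (\<theta>, x)\<bar> \<le> B" and pl: "\<And>x x'. \<bar>\<phi> (\<theta>, x) - \<phi> (\<theta>, x')\<bar> \<le> B * norm (x - x')"
    and gb: "\<And>x t. \<bar>G \<theta> x (y (tix t))\<bar> \<le> B"
    and gl: "\<And>x x' t. \<bar>G \<theta> x (y (tix t)) - G \<theta> x' (y (tix t))\<bar> \<le> B * norm (x - x')"
  shows "(\<integral>\<omega>. (case coupled_pair a xi sg x0 tix l N \<theta> \<omega> of (x, x') \<Rightarrow>
            (\<phi> (\<theta>, x) * (\<Prod>t\<in>UNIV. Hchk G (y (tix t)) \<theta> (x $ t) (x' $ t))
                   - \<phi> (\<theta>, x') * (\<Prod>t\<in>UNIV. Hchk G (y (tix t)) \<theta> (x' $ t) (x $ t)))\<^sup>2 * Hprod G y tix \<theta> x x')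
         \<partial>(noise_space (CARD('t) * 2^l) N :: (nat \<times> nat \<times> 'd \<Rightarrow> real) measure))
      \<le> (B ^ (CARD('t) + 1) * (1 + B * CARD('t)))\<^sup>2 / g ^ CARD('t) *
         (CARD('t) * ((1 + 8 * (real CARD('d) * K\<^sup>2 + 2 * (K\<^sup>2 * (1 + 2 * K\<^sup>2))) + 2 * (real CARD('d) * K\<^sup>2 + 2 * (K\<^sup>2 * (1 + 2 * K\<^sup>2))) * (3 * K\<^sup>2 * (1 + real CARD('d))))
            * CARD('t) * exp ((1 + 8 * (real CARD('d) * K\<^sup>2 + 2 * (K\<^sup>2 * (1 + 2 * K\<^sup>2))) + 2 * (real CARD('d) * K\<^sup>2 + 2 * (K\<^sup>2 * (1 + 2 * K\<^sup>2))) * (3 * K\<^sup>2 * (1 + real CARD('d)))) * CARD('t)) * Delta l))"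
    and "g ^ CARD('t) \<le> (\<integral>\<omega>. (case coupled_pair a xi sg x0 tix l N \<theta> \<omega> of (x, x') \<Rightarrow> 1 * Hprod G y tix \<theta> x x')
         \<partial>(noise_space (CARD('t) * 2^l) N :: (nat \<times> nat \<times> 'd \<Rightarrow> real) measure))"
proof -
  interpret S: scheme "a \<theta>" "xi \<theta>" sg x0 N l "CARD('t) * 2^l" K by (rule sch)
  have CC: "S.Cst = 1 + 8 * (real CARD('d) * K\<^sup>2 + 2 * (K\<^sup>2 * (1 + 2 * K\<^sup>2))) + 2 * (real CARD('d) * K\<^sup>2 + 2 * (K\<^sup>2 * (1 + 2 * K\<^sup>2))) * (3 * K\<^sup>2 * (1 + real CARD('d)))"
    unfolding S.Cst_def S.c0_def ..
  define kt where "kt t = tix t * 2^(l-1)" for t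
  have ce: "coupled_pair a xi sg x0 tix l N \<theta> \<omega> = ((\<chi> t. S.Xf \<omega> (2 * kt t) N), (\<chi> t. S.Xc \<omega> (kt t) N))" for \<omega>
    unfolding kt_def by (rule coupled_eq[where a=a and xi=xi and \<theta>=\<theta>, OF sch])
  have mu: "(noise_space (CARD('t) * 2^l) N :: (nat \<times> nat \<times> 'd \<Rightarrow> real) measure) = S.mu"
    by (rule noise_space_eq)
  have l1: "1 \<le> l" by (rule S.l1)
  have kn: "2 * kt t \<le> CARD('t) * 2^l" for t
  proof -
    have "2 * kt t = tix t * 2^l" unfolding kt_def using l1 by (cases l) auto
    also have "\<dots> \<le> CARD('t) * 2^l" using tixb by simp
    finally show ?thesis .
  qed
  have kh: "Delta l * real (kt t) \<le> real CARD('t)" for t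
  proof -
    have "Delta l * real (kt t) = real (tix t) * (Delta l * 2 ^ (l - 1))" unfolding kt_def by simp
    also have "\<dots> = real (tix t) / 2" using Delta_half[OF l1] by simp
    also have "\<dots> \<le> real CARD('t)" using tixb[of t] by simp
    finally show ?thesis .
  qed
  define E where "E = (1 + 8 * (real CARD('d) * K\<^sup>2 + 2 * (K\<^sup>2 * (1 + 2 * K\<^sup>2))) + 2 * (real CARD('d) * K\<^sup>2 + 2 * (K\<^sup>2 * (1 + 2 * K\<^sup>2))) * (3 * K\<^sup>2 * (1 + real CARD('d))))
            * CARD('t) * exp ((1 + 8 * (real CARD('d) * K\<^sup>2 + 2 * (K\<^sup>2 * (1 + 2 * K\<^sup>2))) + 2 * (real CARD('d) * K\<^sup>2 + 2 * (K\<^sup>2 * (1 + 2 * K\<^sup>2))) * (3 * K\<^sup>2 * (1 + real CARD('d)))) * CARD('t)) * Delta l"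
  define Lc where "Lc = (B ^ (CARD('t) + 1) * (1 + B * CARD('t)))\<^sup>2 / g ^ CARD('t)"
  have Lc0: "0 \<le> Lc" unfolding Lc_def using g0 by simp
  have errt: "(\<integral>\<omega>. (norm (S.Xf \<omega> (2 * kt t) N - S.Xc \<omega> (kt t) N))\<^sup>2 \<partial>S.mu) \<le> E" for t
    unfolding E_def CC[symmetric] by (rule S.err_final[OF kn order_refl kh])
  have E0: "0 \<le> E" unfolding E_def CC[symmetric] using S.Cst_pos S.h_pos by simp
  have sq: "sqint S.mu (\<lambda>\<omega>. S.Xf \<omega> (2 * kt t) N - S.Xc \<omega> (kt t) N)" for t
  proof -
    have "2 * kt t \<le> CARD('t) * 2^l" by (rule kn)
    then show ?thesis by (intro sqint_diff S.Xf_sqint S.Xc_sqint) auto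
  qed
  define R where "R \<omega> = Lc * (\<Sum>t\<in>UNIV. (norm (S.Xf \<omega> (2 * kt t) N - S.Xc \<omega> (kt t) N))\<^sup>2)" for \<omega>
  have Ri: "integrable S.mu R"
    unfolding R_def using sqint_norm2[OF sq] by (intro integrable_mult_right Bochner_Integration.integrable_sum) auto
  have ER: "(\<integral>\<omega>. R \<omega> \<partial>S.mu) \<le> Lc * (CARD('t) * E)"
  proof -
    have "(\<integral>\<omega>. R \<omega> \<partial>S.mu) = Lc * (\<Sum>t\<in>UNIV. (\<integral>\<omega>. (norm (S.Xf \<omega> (2 * kt t) N - S.Xc \<omega> (kt t) N))\<^sup>2 \<partial>S.mu))"
      unfolding R_def using sqint_norm2[OF sq] by (simp add: Bochner_Integration.integral_sum)
    also have "\<dots> \<le> Lc * (\<Sum>t\<in>(UNIV::'t set). E)" using Lc0 errt by (intro mult_left_mono sum_mono) auto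
    finally show ?thesis by simp
  qed
  define Fn where "Fn \<omega> = (case coupled_pair a xi sg x0 tix l N \<theta> \<omega> of (x, x') \<Rightarrow>
            (\<phi> (\<theta>, x) * (\<Prod>t\<in>UNIV. Hchk G (y (tix t)) \<theta> (x $ t) (x' $ t))
                   - \<phi> (\<theta>, x') * (\<Prod>t\<in>UNIV. Hchk G (y (tix t)) \<theta> (x' $ t) (x $ t)))\<^sup>2 * Hprod G y tix \<theta> x x')" for \<omega>
  have Fle: "Fn \<omega> \<le> R \<omega>" for \<omega>
  proof -
    have "Fn \<omega> \<le> Lc * (\<Sum>t\<in>UNIV. (norm ((\<chi> t. S.Xf \<omega> (2 * kt t) N) $ t - (\<chi> t. S.Xc \<omega> (kt t) N) $ t))\<^sup>2)"
      unfolding Fn_def ce prod.case Lc_def by (rule integrand_bound[where G=G and \<theta>=\<theta> and \<phi>=\<phi> and y=y and tix=tix, OF g0 gle B1 pb pl gb gl])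
    then show ?thesis unfolding R_def by simp
  qed
  have main: "(\<integral>\<omega>. Fn \<omega> \<partial>S.mu) \<le> Lc * (CARD('t) * E)"
  proof (cases "integrable S.mu Fn")
    case True
    have "(\<integral>\<omega>. Fn \<omega> \<partial>S.mu) \<le> (\<integral>\<omega>. R \<omega> \<partial>S.mu)" by (rule integral_mono[OF True Ri Fle])
    then show ?thesis using ER by linarith
  next
    case False
    then show ?thesis using Lc0 E0 by (simp add: not_integrable_integral_eq)
  qed
  show "(\<integral>\<omega>. (case coupled_pair a xi sg x0 tix l N \<theta> \<omega> of (x, x') \<Rightarrow>
            (\<phi> (\<theta>, x) * (\<Prod>t\<in>UNIV. Hchk G (y (tix t)) \<theta> (x $ t) (x' $ t))
                   - \<phi> (\<theta>, x') * (\<Prod>t\<in>UNIV. Hchk G (y (tix t)) \<theta> (x' $ t) (x $ t)))\<^sup>2 * Hprod G y tix \<theta> x x')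
         \<partial>(noise_space (CARD('t) * 2^l) N :: (nat \<times> nat \<times> 'd \<Rightarrow> real) measure)) \<le> Lc * (CARD('t) * E)"
    using main unfolding Fn_def mu Lc_def E_def .
  define Hn where "Hn \<omega> = (case coupled_pair a xi sg x0 tix l N \<theta> \<omega> of (x, x') \<Rightarrow> 1 * Hprod G y tix \<theta> x x')" for \<omega>
  have Hn_eq: "Hn = (\<lambda>\<omega>. \<Prod>t\<in>UNIV. (G \<theta> (S.Xf \<omega> (2 * kt t) N) (y (tix t)) + G \<theta> (S.Xc \<omega> (kt t) N) (y (tix t))) / 2)"
    unfolding Hn_def ce Hprod_def Hk_def by (rule ext) simp
  have gc: "continuous_on UNIV (\<lambda>x. G \<theta> x (y (tix t)))" for t
    by (rule lip_cont[of _ B]) (use gl in simp)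
  have Hm: "Hn \<in> borel_measurable S.mu"
    unfolding Hn_eq
    by (intro borel_measurable_prod borel_measurable_divide borel_measurable_add borel_measurable_const
          borel_measurable_continuous_on[OF gc] S.Xf_meas S.Xc_meas) simp_all
  have Hb: "norm (Hn \<omega>) \<le> B ^ CARD('t)" for \<omega>
  proof -
    have "norm (Hn \<omega>) = (\<Prod>t\<in>UNIV. \<bar>(G \<theta> (S.Xf \<omega> (2 * kt t) N) (y (tix t)) + G \<theta> (S.Xc \<omega> (kt t) N) (y (tix t))) / 2\<bar>)"
      unfolding Hn_eq by (simp add: abs_prod)
    also have "\<dots> \<le> (\<Prod>t\<in>(UNIV::'t set). B)"
    proof (intro prod_mono conjI abs_ge_zero)
      fix t
      show "\<bar>(G \<theta> (S.Xf \<omega> (2 * kt t) N) (y (tix t)) + G \<theta> (S.Xc \<omega> (kt t) N) (y (tix t))) / 2\<bar> \<le> B"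
        using gb[of "S.Xf \<omega> (2 * kt t) N" t] gb[of "S.Xc \<omega> (kt t) N" t] by simp
    qed
    finally show ?thesis by simp
  qed
  have Hi: "integrable S.mu Hn"
    by (rule S.P.integrable_const_bound[where B="B ^ CARD('t)", OF _ Hm]) (use Hb in simp)
  have Hlow: "g ^ CARD('t) \<le> Hn \<omega>" for \<omega>
  proof -
    have "(\<Prod>t\<in>(UNIV::'t set). g) \<le> (\<Prod>t\<in>UNIV. (G \<theta> (S.Xf \<omega> (2 * kt t) N) (y (tix t)) + G \<theta> (S.Xc \<omega> (kt t) N) (y (tix t))) / 2)"
    proof (intro prod_mono conjI)
      fix t
      show "0 \<le> g" using g0 by simp
      show "g \<le> (G \<theta> (S.Xf \<omega> (2 * kt t) N) (y (tix t)) + G \<theta> (S.Xc \<omega> (kt t) N) (y (tix t))) / 2"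
        using gle[of "S.Xf \<omega> (2 * kt t) N" "y (tix t)"] gle[of "S.Xc \<omega> (kt t) N" "y (tix t)"] by simp
    qed
    then show ?thesis unfolding Hn_eq by simp
  qed
  have "g ^ CARD('t) = (\<integral>\<omega>. g ^ CARD('t) \<partial>S.mu)" by (simp add: S.P.prob_space)
  also have "\<dots> \<le> (\<integral>\<omega>. Hn \<omega> \<partial>S.mu)" by (rule integral_mono[OF _ Hi Hlow]) simp
  finally show "g ^ CARD('t) \<le> (\<integral>\<omega>. (case coupled_pair a xi sg x0 tix l N \<theta> \<omega> of (x, x') \<Rightarrow> 1 * Hprod G y tix \<theta> x x')
         \<partial>(noise_space (CARD('t) * 2^l) N :: (nat \<times> nat \<times> 'd \<Rightarrow> real) measure))"
    unfolding mu Hn_def .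
qed


lemma outer_bound:
  fixes Th :: "(real^'p::finite) set" and \<nu> If I1 :: "real^'p \<Rightarrow> real"
  assumes Th: "Th \<in> sets lborel" and num: "\<nu> \<in> borel_measurable lborel"
    and nun: "\<forall>\<theta>\<in>Th. 0 \<le> \<nu> \<theta>" and nup: "(\<integral>\<^sup>+\<theta>\<in>Th. ennreal (\<nu> \<theta>) \<partial>lborel) = 1"
    and Ifb: "\<And>\<theta>. \<theta> \<in> Th \<Longrightarrow> If \<theta> \<le> c" and I1b: "\<And>\<theta>. \<theta> \<in> Th \<Longrightarrow> g0 \<le> I1 \<theta>"
    and g0: "0 < g0" and c0: "0 \<le> c"
  shows "(LINT \<theta>:Th|lborel. \<nu> \<theta> * If \<theta>) / (LINT \<theta>:Th|lborel. \<nu> \<theta> * I1 \<theta>) \<le> c / g0"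
proof -
  define w where "w \<theta> = indicator Th \<theta> * \<nu> \<theta>" for \<theta>
  have wm: "w \<in> borel_measurable lborel" unfolding w_def using Th num by measurable
  have w0: "0 \<le> w \<theta>" for \<theta> unfolding w_def using nun by (auto split: split_indicator)
  have wnn: "(\<integral>\<^sup>+\<theta>. ennreal (w \<theta>) \<partial>lborel) = 1"
  proof -
    have "(\<integral>\<^sup>+\<theta>. ennreal (w \<theta>) \<partial>lborel) = (\<integral>\<^sup>+\<theta>. ennreal (\<nu> \<theta>) * indicator Th \<theta> \<partial>lborel)"
      unfolding w_def by (intro nn_integral_cong) (auto split: split_indicator)
    then show ?thesis using nup by simp
  qed
  have wi: "integrable lborel w"
    by (rule integrableI_nonneg[OF wm]) (use w0 wnn in auto)
  have wint: "(\<integral>\<theta>. w \<theta> \<partial>lborel) = 1"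
    using integral_eq_nn_integral[OF wm] w0 wnn by simp
  have eqf: "(LINT \<theta>:Th|lborel. \<nu> \<theta> * F \<theta>) = (\<integral>\<theta>. w \<theta> * F \<theta> \<partial>lborel)" for F
    unfolding set_lebesgue_integral_def w_def by (simp add: mult.assoc)
  have pf: "(\<integral>\<theta>. w \<theta> * If \<theta> \<partial>lborel) \<le> c"
  proof (cases "integrable lborel (\<lambda>\<theta>. w \<theta> * If \<theta>)")
    case True
    have "(\<integral>\<theta>. w \<theta> * If \<theta> \<partial>lborel) \<le> (\<integral>\<theta>. w \<theta> * c \<partial>lborel)"
    proof (rule integral_mono[OF True])
      show "integrable lborel (\<lambda>\<theta>. w \<theta> * c)" using wi by simp
      fix \<theta>
      show "w \<theta> * If \<theta> \<le> w \<theta> * c"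
      proof (cases "\<theta> \<in> Th")
        case True then show ?thesis using Ifb w0 by (intro mult_left_mono) auto
      next
        case False then show ?thesis by (simp add: w_def)
      qed
    qed
    also have "\<dots> = c" using wint by simp
    finally show ?thesis .
  next
    case False then show ?thesis using c0 by (simp add: not_integrable_integral_eq)
  qed
  have p1: "(\<integral>\<theta>. w \<theta> * I1 \<theta> \<partial>lborel) = 0 \<or> g0 \<le> (\<integral>\<theta>. w \<theta> * I1 \<theta> \<partial>lborel)"
  proof (cases "integrable lborel (\<lambda>\<theta>. w \<theta> * I1 \<theta>)")
    case True
    have "g0 = (\<integral>\<theta>. w \<theta> * g0 \<partial>lborel)" using wint by simp
    also have "\<dots> \<le> (\<integral>\<theta>. w \<theta> * I1 \<theta> \<partial>lborel)"
    proof (rule integral_mono[OF _ True])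
      show "integrable lborel (\<lambda>\<theta>. w \<theta> * g0)" using wi by simp
      fix \<theta>
      show "w \<theta> * g0 \<le> w \<theta> * I1 \<theta>"
      proof (cases "\<theta> \<in> Th")
        case True then show ?thesis using I1b w0 by (intro mult_left_mono) auto
      next
        case False then show ?thesis by (simp add: w_def)
      qed
    qed
    finally show ?thesis by simp
  next
    case False then show ?thesis by (simp add: not_integrable_integral_eq)
  qed
  have "(\<integral>\<theta>. w \<theta> * If \<theta> \<partial>lborel) / (\<integral>\<theta>. w \<theta> * I1 \<theta> \<partial>lborel) \<le> c / g0"
  proof (cases "(\<integral>\<theta>. w \<theta> * I1 \<theta> \<partial>lborel) = 0")
    case True then show ?thesis using c0 g0 by simp
  next
    case False
    then have P: "g0 \<le> (\<integral>\<theta>. w \<theta> * I1 \<theta> \<partial>lborel)" using p1 by simp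
    show ?thesis
    proof (cases "(\<integral>\<theta>. w \<theta> * If \<theta> \<partial>lborel) \<le> 0")
      case True
      then have "(\<integral>\<theta>. w \<theta> * If \<theta> \<partial>lborel) / (\<integral>\<theta>. w \<theta> * I1 \<theta> \<partial>lborel) \<le> 0"
        using P g0 by (intro divide_nonpos_pos) auto
      also have "0 \<le> c / g0" using c0 g0 by simp
      finally show ?thesis .
    next
      case False
      have "(\<integral>\<theta>. w \<theta> * If \<theta> \<partial>lborel) / (\<integral>\<theta>. w \<theta> * I1 \<theta> \<partial>lborel) \<le> (\<integral>\<theta>. w \<theta> * If \<theta> \<partial>lborel) / g0"
        using False P g0 by (intro divide_left_mono) auto
      also have "\<dots> \<le> c / g0" using pf g0 by (intro divide_right_mono) auto
      finally show ?thesis .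
    qed
  qed
  then show ?thesis unfolding eqf[of If] eqf[of I1] .
qed


theorem lemmaA3:
  fixes \<Theta> :: "(real^'p::finite) set" and \<nu> :: "real^'p \<Rightarrow> real" and x0 :: "real^'d::finite"
    and a :: "real^'p \<Rightarrow> (real^'d) \<times> real \<Rightarrow> real^'d"
    and xi :: "real^'p \<Rightarrow> (real^'d) \<times> (real^'d) \<Rightarrow> real"
    and sg :: "real^'d \<Rightarrow> real^'d^'d"
    and G :: "real^'p \<Rightarrow> real^'d \<Rightarrow> 'y \<Rightarrow> real"
    and y :: "nat \<Rightarrow> 'y" and tix :: "'t::finite \<Rightarrow> nat"
    and \<phi> :: "(real^'p) \<times> (real^'d^'t) \<Rightarrow> real"
  assumes tix: "bij_betw tix UNIV {1..CARD('t)}"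
    and Theta_meas: "\<Theta> \<in> sets lborel"
    and nu_meas: "\<nu> \<in> borel_measurable lborel"
    and nu_nonneg: "\<forall>\<theta>\<in>\<Theta>. 0 \<le> \<nu> \<theta>"
    and nu_prob: "(\<integral>\<^sup>+\<theta>\<in>\<Theta>. ennreal (\<nu> \<theta>) \<partial>lborel) = 1"
    and a_meas: "(\<lambda>(\<theta>, z). a \<theta> z) \<in> borel_measurable borel"
    and xi_meas: "(\<lambda>(\<theta>, z). xi \<theta> z) \<in> borel_measurable borel"
    and A1_a: "\<exists>M. \<forall>\<theta>\<in>\<Theta>. C2b_bd UNIV M (a \<theta>)"
    and A1_xi: "\<exists>M. \<forall>\<theta>\<in>\<Theta>. C2b_bd UNIV M (xi \<theta>)"
    and A1_sigma: "C2b_on UNIV sg"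
    and A1_pd: "\<forall>x v. v \<noteq> 0 \<longrightarrow> 0 < v \<bullet> ((sg x ** transpose (sg x)) *v v)"
    and G_bounded: "\<exists>M. \<forall>\<theta>\<in>\<Theta>. \<forall>x yy. G \<theta> x yy \<le> M"
    and A2_smooth: "\<forall>yy. C2b_on (\<Theta> \<times> UNIV) (\<lambda>(\<theta>, x). G \<theta> x yy)"
    and A2_inf: "\<exists>g>0. \<forall>\<theta>\<in>\<Theta>. \<forall>x yy. g \<le> G \<theta> x yy"
    and phi: "C2b_on (\<Theta> \<times> UNIV) \<phi>"
  shows "\<exists>C. \<forall>l N. 1 \<le> l \<longrightarrow> 1 \<le> N \<longrightarrow>
     check_pi \<Theta> \<nu> a xi sg x0 G y tix l N
       (\<lambda>\<theta> x x'. (\<phi> (\<theta>, x) * (\<Prod>t\<in>UNIV. Hchk G (y (tix t)) \<theta> (x $ t) (x' $ t))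
                   - \<phi> (\<theta>, x') * (\<Prod>t\<in>UNIV. Hchk G (y (tix t)) \<theta> (x' $ t) (x $ t)))\<^sup>2)
     \<le> C * Delta l"
proof -
  obtain Ma where Ma: "\<forall>\<theta>\<in>\<Theta>. C2b_bd UNIV Ma (a \<theta>)" using A1_a by blast
  obtain Mx where Mx: "\<forall>\<theta>\<in>\<Theta>. C2b_bd UNIV Mx (xi \<theta>)" using A1_xi by blast
  obtain Ms where Ms: "C2b_bd UNIV Ms sg" using A1_sigma unfolding C2b_on_def by blast
  obtain g where g0: "0 < g" and gle: "\<forall>\<theta>\<in>\<Theta>. \<forall>x yy. g \<le> G \<theta> x yy" using A2_inf by blast
  have "\<forall>t. \<exists>M. C2b_bd (\<Theta> \<times> UNIV) M (\<lambda>(\<theta>, x). G \<theta> x (y (tix t)))"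
    using A2_smooth unfolding C2b_on_def by blast
  then obtain MG where MG0: "\<forall>t. C2b_bd (\<Theta> \<times> UNIV) (MG t) (\<lambda>(\<theta>, x). G \<theta> x (y (tix t)))"
    using choice[of "\<lambda>t M. C2b_bd (\<Theta> \<times> UNIV) M (\<lambda>(\<theta>, x). G \<theta> x (y (tix t)))"] by blast
  have MG: "C2b_bd (\<Theta> \<times> UNIV) (MG t) (\<lambda>(\<theta>, x). G \<theta> x (y (tix t)))" for t using MG0 by blast
  obtain Mp where Mp: "C2b_bd (\<Theta> \<times> UNIV) Mp \<phi>" using phi unfolding C2b_on_def by blast
  define K where "K = \<bar>Ma\<bar> + \<bar>Mx\<bar> + \<bar>Ms\<bar>"
  define B where "B = 1 + \<bar>Mp\<bar> + (\<Sum>t\<in>UNIV. \<bar>MG t\<bar>)"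
  have K0: "0 \<le> K" unfolding K_def by simp
  have B1: "1 \<le> B" unfolding B_def by (simp add: sum_nonneg)
  have MGB: "MG t \<le> B" for t
  proof -
    have "\<bar>MG t\<bar> \<le> (\<Sum>t\<in>UNIV. \<bar>MG t\<bar>)" by (rule member_le_sum) auto
    then show ?thesis unfolding B_def by simp
  qed
  have MpB: "Mp \<le> B"
  proof -
    have "0 \<le> (\<Sum>t\<in>UNIV. \<bar>MG t\<bar>)" by (rule sum_nonneg) simp
    then show ?thesis unfolding B_def by linarith
  qed
  have tixb: "tix t \<le> CARD('t)" for t using tix unfolding bij_betw_def by auto
  define CC where "CC = (1 + 8 * (real CARD('d) * K\<^sup>2 + 2 * (K\<^sup>2 * (1 + 2 * K\<^sup>2))) + 2 * (real CARD('d) * K\<^sup>2 + 2 * (K\<^sup>2 * (1 + 2 * K\<^sup>2))) * (3 * K\<^sup>2 * (1 + real CARD('d))))"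
  define KF where "KF = (B ^ (CARD('t) + 1) * (1 + B * CARD('t)))\<^sup>2 / g ^ CARD('t) * (CARD('t) * (CC * CARD('t) * exp (CC * CARD('t))))"
  have CC0: "0 \<le> CC" unfolding CC_def by simp
  have KF0: "0 \<le> KF" unfolding KF_def using g0 CC0 by simp
  show ?thesis
  proof (intro exI[of _ "KF / g ^ CARD('t)"] allI impI)
    fix l N :: nat assume l1: "1 \<le> l" and N1: "1 \<le> N"
    have Dpos: "0 < Delta l" unfolding Delta_def by simp
    have sch: "scheme (a \<theta>) (xi \<theta>) sg N l (CARD('t) * 2^l) K" if th: "\<theta> \<in> \<Theta>" for \<theta>
    proof -
      have aK: "Ma \<le> K" using abs_ge_self[of Ma] abs_ge_zero[of Mx] abs_ge_zero[of Ms] unfolding K_def by linarith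
      have xK: "Mx \<le> K" using abs_ge_zero[of Ma] abs_ge_self[of Mx] abs_ge_zero[of Ms] unfolding K_def by linarith
      have sK: "Ms \<le> K" using abs_ge_zero[of Ma] abs_ge_zero[of Mx] abs_ge_self[of Ms] unfolding K_def by linarith
      have a': "C2b_bd UNIV K (a \<theta>)" by (rule C2b_bd_mono[OF bspec[OF Ma th] aK])
      have x': "C2b_bd UNIV K (xi \<theta>)" by (rule C2b_bd_mono[OF bspec[OF Mx th] xK])
      have s': "C2b_bd UNIV K sg" using Ms sK by (rule C2b_bd_mono)
      show ?thesis
      proof (unfold_locales)
        show "1 \<le> N" by fact
        show "1 \<le> l" by fact
        show "1 \<le> CARD('t) * 2 ^ l" by (simp add: Suc_le_eq)
        show "0 \<le> K" by fact
        show "norm (a \<theta> z) \<le> K" for z by (rule C2b_UNIV_lip(2)[OF a'])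
        show "norm (a \<theta> z - a \<theta> z') \<le> K * norm (z - z')" for z z' by (rule C2b_UNIV_lip(1)[OF a'])
        show "\<bar>xi \<theta> z - xi \<theta> z'\<bar> \<le> K * norm (z - z')" for z z' using C2b_UNIV_lip(1)[OF x'] by simp
        show "norm (sg z) \<le> K" for z by (rule C2b_UNIV_lip(2)[OF s'])
        show "norm (sg z - sg z') \<le> K * norm (z - z')" for z z' by (rule C2b_UNIV_lip(1)[OF s'])
        show "continuous_on UNIV (a \<theta>)" by (rule lip_cont[OF C2b_UNIV_lip(1)[OF a']])
        show "continuous_on UNIV (xi \<theta>)" by (rule lip_cont[OF C2b_UNIV_lip(1)[OF x']])
        show "continuous_on UNIV sg" by (rule lip_cont[OF C2b_UNIV_lip(1)[OF s']])
      qed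
    qed
    have IB: "(\<integral>\<omega>. (case coupled_pair a xi sg x0 tix l N \<theta> \<omega> of (x, x') \<Rightarrow>
            (\<phi> (\<theta>, x) * (\<Prod>t\<in>UNIV. Hchk G (y (tix t)) \<theta> (x $ t) (x' $ t))
                   - \<phi> (\<theta>, x') * (\<Prod>t\<in>UNIV. Hchk G (y (tix t)) \<theta> (x' $ t) (x $ t)))\<^sup>2 * Hprod G y tix \<theta> x x')
         \<partial>(noise_space (CARD('t) * 2^l) N :: (nat \<times> nat \<times> 'd \<Rightarrow> real) measure)) \<le> KF * Delta l"
      and IB1: "g ^ CARD('t) \<le> (\<integral>\<omega>. (case coupled_pair a xi sg x0 tix l N \<theta> \<omega> of (x, x') \<Rightarrow> 1 * Hprod G y tix \<theta> x x')
         \<partial>(noise_space (CARD('t) * 2^l) N :: (nat \<times> nat \<times> 'd \<Rightarrow> real) measure))"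
      if th: "\<theta> \<in> \<Theta>" for \<theta>
    proof -
      have p': "C2b_bd (\<Theta> \<times> UNIV) B \<phi>" by (rule C2b_bd_mono[OF Mp MpB])
      have G': "C2b_bd (\<Theta> \<times> UNIV) B (\<lambda>(\<theta>, x). G \<theta> x (y (tix t)))" for t by (rule C2b_bd_mono[OF MG MGB])
      have pb: "\<bar>\<phi> (\<theta>, x)\<bar> \<le> B" for x using C2b_slice_lip(2)[OF p' th] by simp
      have pl: "\<bar>\<phi> (\<theta>, x) - \<phi> (\<theta>, x')\<bar> \<le> B * norm (x - x')" for x x' using C2b_slice_lip(1)[OF p' th] by simp
      have gb: "\<bar>G \<theta> x (y (tix t))\<bar> \<le> B" for x t using C2b_slice_lip(2)[OF G' th, of t x] by simp
      have gl: "\<bar>G \<theta> x (y (tix t)) - G \<theta> x' (y (tix t))\<bar> \<le> B * norm (x - x')" for x x' t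
        using C2b_slice_lip(1)[OF G' th, of t x x'] by simp
      have gle': "g \<le> G \<theta> x yy" for x yy using gle th by blast
      note R = inner_bounds[where ?x0.0=x0 and a=a and xi=xi and \<theta>=\<theta> and G=G and y=y and tix=tix and \<phi>=\<phi>, OF sch[OF th] tixb g0 gle' B1 pb pl gb gl]
      show "(\<integral>\<omega>. (case coupled_pair a xi sg x0 tix l N \<theta> \<omega> of (x, x') \<Rightarrow>
            (\<phi> (\<theta>, x) * (\<Prod>t\<in>UNIV. Hchk G (y (tix t)) \<theta> (x $ t) (x' $ t))
                   - \<phi> (\<theta>, x') * (\<Prod>t\<in>UNIV. Hchk G (y (tix t)) \<theta> (x' $ t) (x $ t)))\<^sup>2 * Hprod G y tix \<theta> x x')
         \<partial>(noise_space (CARD('t) * 2^l) N :: (nat \<times> nat \<times> 'd \<Rightarrow> real) measure)) \<le> KF * Delta l"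
        using R(1) unfolding KF_def CC_def by (simp add: mult_ac)
      show "g ^ CARD('t) \<le> (\<integral>\<omega>. (case coupled_pair a xi sg x0 tix l N \<theta> \<omega> of (x, x') \<Rightarrow> 1 * Hprod G y tix \<theta> x x')
         \<partial>(noise_space (CARD('t) * 2^l) N :: (nat \<times> nat \<times> 'd \<Rightarrow> real) measure))"
        by (rule R(2))
    qed
    have "check_pi \<Theta> \<nu> a xi sg x0 G y tix l N
       (\<lambda>\<theta> x x'. (\<phi> (\<theta>, x) * (\<Prod>t\<in>UNIV. Hchk G (y (tix t)) \<theta> (x $ t) (x' $ t))
                   - \<phi> (\<theta>, x') * (\<Prod>t\<in>UNIV. Hchk G (y (tix t)) \<theta> (x' $ t) (x $ t)))\<^sup>2) \<le> (KF * Delta l) / g ^ CARD('t)"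
      unfolding check_pi_def pi_unnorm_def
      by (rule outer_bound[OF Theta_meas nu_meas nu_nonneg nu_prob IB IB1]) (use g0 KF0 Dpos in auto)
    then show "check_pi \<Theta> \<nu> a xi sg x0 G y tix l N
       (\<lambda>\<theta> x x'. (\<phi> (\<theta>, x) * (\<Prod>t\<in>UNIV. Hchk G (y (tix t)) \<theta> (x $ t) (x' $ t))
                   - \<phi> (\<theta>, x') * (\<Prod>t\<in>UNIV. Hchk G (y (tix t)) \<theta> (x' $ t) (x $ t)))\<^sup>2) \<le> KF / g ^ CARD('t) * Delta l"
      by (simp add: mult_ac)
  qed
qed


end
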